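(* Assume the power injection $p$ satisfies: each $p_i$ is piece-wise continuous and there exists $0\leqslant\bar t<\infty$ with $p_i(t)=p_i^*$ for all $i\in\mathcal{I}$ and $t\geqslant\bar t$, where $\sum_{i\in\mathcal{I}}p_i^*=0$. Assume $\epsilon_iT_i<1$ for every $i\in\mathcal{I}_u$. Then the closed-loop system described in the context (network dynamics with $\alpha=\alpha_{DF}+\alpha_{MPC}$) satisfies: (i) (frequency invariance) for every $i\in\mathcal{I}_\omega$, if $\omega_i(0)\in[\underline\omega_i,\bar\omega_i]$ then $\omega_i(t)\in[\underline\omega_i,\bar\omega_i]$ for all $t\geqslant0$; (ii) (frequency attractivity) for every $i\in\mathcal{I}_\omega$, if $\omega_i(0)\notin[\underline\omega_i,\bar\omega_i]$ then there exists a finite $t_0$ with $\omega_i(t)\in[\underline\omega_i,\bar\omega_i]$ for all $t\geqslant t_0$; (iii) (asymptotic stability) the closed-loop trajectory converges to the same equilibrium $(f_\infty,\mathbf{0}_n)$ as the open-loop system ($\alpha\equiv\mathbf{0}_n$). Furthermore, $\alpha(t)$, $\alpha_{MPC}(t)$ and $\alpha_{DF}(t)$ converge to $\mathbf{0}_n$ as $t\to\infty$.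
   Context: Network: $\mathcal{G}=(\mathcal{I},\mathcal{E})$ connected undirected graph, $\mathcal{I}=\{1,\dots,n\}$, $\mathcal{E}=\{e_1,\dots,e_m\}$, fixed orientation, incidence matrix $D\in\mathbb{R}^{m\times n}$; $M=\mathrm{diag}(M_i)$, $E=\mathrm{diag}(E_i)$ with $M_i,E_i>0$; $Y_b\in\mathbb{R}^{m\times m}$ diagonal positive. $\mathcal{I}_\omega\subseteq\mathcal{I}_u\subseteq\mathcal{I}$; $\mathbb{A}=\{y\in\mathbb{R}^n:y_w=0\ \forall w\notin\mathcal{I}_u\}$. Dynamics: $\dot f=Y_bD\omega$, $M\dot\omega=-E\omega-D^Tf+p(t)+\alpha(t)$. Under the assumption on $p$, the open-loop system ($\alpha\equiv0$) converges to an equilibrium $(f_\infty,\mathbf{0}_n)$ determined by the power injection profile and network parameters. Bottom layer (MPC): parameters $T,\tilde t>0$, $N=\lceil\tilde t/T\rceil$, $c_i,\epsilon_i,T_i>0$ ($i\in\mathcal{I}_u$), $d>0$, safe bounds $\underline\omega_i<\bar\omega_i$ ($i\in\mathcal{I}_\omega$). For $\hat P=[\hat p(0),\dots,\hat p(N-1)]$, $f_0,\omega_0$, $a_0\in\mathbb{A}$, $\hat u^*(\hat P,f_0,\omega_0,a_0)$ is the $\hat u$-part of the unique optimal solution of: minimize $\sum_{i\in\mathcal{I}_u}c_i\hat u_i^2+d\beta^2$ over $\hat f(k),\hat\omega(k),\hat\alpha(k)$ ($k=0..N$), $\hat u\in\mathbb{R}^n$, $\beta\in\mathbb{R}$, s.t.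 for $k=0..N-1$: $\hat f(k+1)=\hat f(k)+TY_bD\hat\omega(k)$; $M\hat\omega(k+1)=M\hat\omega(k)+T(-E\hat\omega(k)-D^T\hat f(k)+\hat p(k)+\hat u)$; $\hat\alpha_i(k+1)=\hat\alpha_i(k)+T(-\hat\alpha_i(k)/T_i-\hat\omega_i(k)+\hat u_i)$ ($i\in\mathcal{I}_u$); $\hat\alpha_i\equiv0$ ($i\notin\mathcal{I}_u$); $\hat u\in\mathbb{A}$; $(\hat f(0),\hat\omega(0),\hat\alpha(0))=(f_0,\omega_0,a_0)$; $\underline\omega_i-\beta\leqslant\hat\omega_i(k+1)\leqslant\bar\omega_i+\beta$ ($i\in\mathcal{I}_\omega$); $|\hat u_i|\leqslant\epsilon_i|a_{0,i}|$ ($i\in\mathcal{I}_u$). Sampling times $0=\Delta^0<\Delta^1<\cdots$; piece-wise continuous forecasts $p^{fcst}_{\Delta^j}:[\Delta^j,\Delta^j+\tilde t]\to\mathbb{R}^n$, $\hat P^{fcst}_j=[p^{fcst}_{\Delta^j}(\Delta^j+kT)]_{k=0}^{N-1}$. Then $u_{MPC}(t)=\hat u^*(\hat P^{fcst}_j,f(\Delta^j),\omega(\Delta^j),\alpha_{MPC}(\Delta^j))$ for $t\in[\Delta^j,\Delta^{j+1})$; stability filter $\hat u_{MPC,i}(t)=\max\{-\epsilon_i|\alpha_{MPC,i}(t)|,\min\{\epsilon_i|\alpha_{MPC,i}(t)|,u_{MPC,i}(t)\}\}$; low-pass filter $\dot\alpha_{MPC,i}=-\alpha_{MPC,i}/T_i-\omega_i+\hat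 u_{MPC,i}$ for $i\in\mathcal{I}_u$, $\alpha_{MPC,i}\equiv0$ otherwise. Top layer: for $i\in\mathcal{I}_\omega$ let $\bar\gamma_i,\underline\gamma_i>0$ and $\underline\omega_i<\underline\omega_i^{thr}<0<\bar\omega_i^{thr}<\bar\omega_i$; let $v_i=E_i\omega_i+[D^T]_if-p_i-\alpha_{MPC,i}$ (where $[D^T]_i$ is the $i$th row of $D^T$), and $\alpha_{DF,i}=\min\{0,\bar\gamma_i(\bar\omega_i-\omega_i)/(\omega_i-\bar\omega_i^{thr})+v_i\}$ if $\omega_i>\bar\omega_i^{thr}$, $\alpha_{DF,i}=0$ if $\underline\omega_i^{thr}\leqslant\omega_i\leqslant\bar\omega_i^{thr}$, $\alpha_{DF,i}=\max\{0,\underline\gamma_i(\underline\omega_i-\omega_i)/(\underline\omega_i^{thr}-\omega_i)+v_i\}$ if $\omega_i<\underline\omega_i^{thr}$; $\alpha_{DF,i}\equiv0$ for $i\notin\mathcal{I}_\omega$. The total control is $\alpha=\alpha_{DF}+\alpha_{MPC}$. *)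

theory Defs
  imports "HOL-Analysis.Analysis"
begin

definition incidence_matrix :: "('e::finite \<Rightarrow> 'i::finite) \<Rightarrow> ('e \<Rightarrow> 'i) \<Rightarrow> real^'i^'e" where
  "incidence_matrix src snk = (\<chi> e i. if i = src e then 1 else if i = snk e then -1 else 0)"

definition simple_graph :: "('e \<Rightarrow> 'i) \<Rightarrow> ('e \<Rightarrow> 'i) \<Rightarrow> bool" where
  "simple_graph src snk \<longleftrightarrow> (\<forall>e. src e \<noteq> snk e) \<and>
     (\<forall>e e'. {src e, snk e} = {src e', snk e'} \<longrightarrow> e = e')"

definition connected_graph :: "('e \<Rightarrow> 'i) \<Rightarrow> ('e \<Rightarrow> 'i) \<Rightarrow> bool" where
  "connected_graph src snk \<longleftrightarrow>
     (\<forall>i j. (i, j) \<in> ({(src e, snk e) | e. True} \<union> {(snk e, src e) | e. True})\<^sup>*)"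

definition piecewise_continuous_on :: "real set \<Rightarrow> (real \<Rightarrow> real) \<Rightarrow> bool" where
  "piecewise_continuous_on I g \<longleftrightarrow>
     (\<exists>S. (\<forall>a b. finite (S \<inter> {a..b})) \<and> continuous_on (I - S) g \<and>
          (\<forall>s\<in>S \<inter> I. (\<exists>l. (g \<longlongrightarrow> l) (at s within (I \<inter> {..<s}))) \<and>
                      (\<exists>r. (g \<longlongrightarrow> r) (at s within (I \<inter> {s<..})))))"

text \<open>Feasibility of (fh, wh, ah, u, beta) for the finite horizon problem with data
  P (forecast samples P 0 .. P (N-1)), initial state (f0, w0, a0).
  Y_b = diag y, M = diag Mv, E = diag Ev.\<close>

definition mpc_feasible ::
  "real \<Rightarrow> nat \<Rightarrow> real^'e::finite \<Rightarrow> real^'i::finite^'e \<Rightarrow> real^'i \<Rightarrow> real^'i \<Rightarrow>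
   'i set \<Rightarrow> 'i set \<Rightarrow> ('i \<Rightarrow> real) \<Rightarrow> ('i \<Rightarrow> real) \<Rightarrow> ('i \<Rightarrow> real) \<Rightarrow> ('i \<Rightarrow> real) \<Rightarrow>
   (nat \<Rightarrow> real^'i) \<Rightarrow> real^'e \<Rightarrow> real^'i \<Rightarrow> real^'i \<Rightarrow>
   (nat \<Rightarrow> real^'e) \<Rightarrow> (nat \<Rightarrow> real^'i) \<Rightarrow> (nat \<Rightarrow> real^'i) \<Rightarrow> real^'i \<Rightarrow> real \<Rightarrow> bool" where
  "mpc_feasible T N y D Mv Ev Iu Iw Tc eps wlo whi P f0 w0 a0 fh wh ah u \<beta> \<longleftrightarrow>
     (\<forall>k<N. \<forall>e. fh (Suc k) $ e = fh k $ e + T * (y $ e * (D *v wh k) $ e)) \<and>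
     (\<forall>k<N. \<forall>i. Mv $ i * wh (Suc k) $ i =
        Mv $ i * wh k $ i + T * (- Ev $ i * wh k $ i - (transpose D *v fh k) $ i + P k $ i + u $ i)) \<and>
     (\<forall>k<N. \<forall>i\<in>Iu. ah (Suc k) $ i = ah k $ i + T * (- ah k $ i / Tc i - wh k $ i + u $ i)) \<and>
     (\<forall>k\<le>N. \<forall>i. i \<notin> Iu \<longrightarrow> ah k $ i = 0) \<and>
     (\<forall>i. i \<notin> Iu \<longrightarrow> u $ i = 0) \<and>
     fh 0 = f0 \<and> wh 0 = w0 \<and> ah 0 = a0 \<and>
     (\<forall>k<N. \<forall>i\<in>Iw. wlo i - \<beta> \<le> wh (Suc k) $ i \<and> wh (Suc k) $ i \<le> whi i + \<beta>) \<and>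
     (\<forall>i\<in>Iu. \<bar>u $ i\<bar> \<le> eps i * \<bar>a0 $ i\<bar>)"

definition mpc_cost :: "'i::finite set \<Rightarrow> ('i \<Rightarrow> real) \<Rightarrow> real \<Rightarrow> real^'i \<Rightarrow> real \<Rightarrow> real" where
  "mpc_cost Iu c d u \<beta> = (\<Sum>i\<in>Iu. c i * (u $ i)\<^sup>2) + d * \<beta>\<^sup>2"

definition mpc_u ::
  "real \<Rightarrow> nat \<Rightarrow> real^'e::finite \<Rightarrow> real^'i::finite^'e \<Rightarrow> real^'i \<Rightarrow> real^'i \<Rightarrow>
   'i set \<Rightarrow> 'i set \<Rightarrow> ('i \<Rightarrow> real) \<Rightarrow> ('i \<Rightarrow> real) \<Rightarrow> ('i \<Rightarrow> real) \<Rightarrow> ('i \<Rightarrow> real) \<Rightarrow>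
   ('i \<Rightarrow> real) \<Rightarrow> real \<Rightarrow>
   (nat \<Rightarrow> real^'i) \<Rightarrow> real^'e \<Rightarrow> real^'i \<Rightarrow> real^'i \<Rightarrow> real^'i" where
  "mpc_u T N y D Mv Ev Iu Iw Tc eps wlo whi c d P f0 w0 a0 =
     (THE u. \<exists>fh wh ah \<beta>.
        mpc_feasible T N y D Mv Ev Iu Iw Tc eps wlo whi P f0 w0 a0 fh wh ah u \<beta> \<and>
        (\<forall>fh' wh' ah' u' \<beta>'.
           mpc_feasible T N y D Mv Ev Iu Iw Tc eps wlo whi P f0 w0 a0 fh' wh' ah' u' \<beta>' \<longrightarrow>
           mpc_cost Iu c d u \<beta> \<le> mpc_cost Iu c d u' \<beta>'))"

definition sat :: "real \<Rightarrow> real \<Rightarrow> real \<Rightarrow> real" where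
  "sat \<epsilon> a u = max (- \<epsilon> * \<bar>a\<bar>) (min (\<epsilon> * \<bar>a\<bar>) u)"

definition alpha_df_comp :: "real \<Rightarrow> real \<Rightarrow> real \<Rightarrow> real \<Rightarrow> real \<Rightarrow> real \<Rightarrow> real \<Rightarrow> real \<Rightarrow> real" where
  "alpha_df_comp wl wh wlt wht gl gh w v =
     (if w > wht then min 0 (gh * (wh - w) / (w - wht) + v)
      else if wlt \<le> w then 0
      else max 0 (gl * (wl - w) / (wlt - w) + v))"

definition alpha_df ::
  "real^'i::finite^'e::finite \<Rightarrow> real^'i \<Rightarrow> 'i set \<Rightarrow> ('i \<Rightarrow> real) \<Rightarrow> ('i \<Rightarrow> real) \<Rightarrow>
   ('i \<Rightarrow> real) \<Rightarrow> ('i \<Rightarrow> real) \<Rightarrow> ('i \<Rightarrow> real) \<Rightarrow> ('i \<Rightarrow> real) \<Rightarrow>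
   real^'e \<Rightarrow> real^'i \<Rightarrow> real^'i \<Rightarrow> real^'i \<Rightarrow> real^'i" where
  "alpha_df D Ev Iw wlo whi wlt wht gl gh f w p aM =
     (\<chi> i. if i \<in> Iw then
              alpha_df_comp (wlo i) (whi i) (wlt i) (wht i) (gl i) (gh i) (w $ i)
                 (Ev $ i * w $ i + (transpose D *v f) $ i - p $ i - aM $ i)
            else 0)"

definition locally_finite_set :: "real set \<Rightarrow> bool" where
  "locally_finite_set S \<longleftrightarrow> (\<forall>a b. finite (S \<inter> {a..b}))"

definition open_loop_sol ::
  "real^'e::finite \<Rightarrow> real^'i::finite^'e \<Rightarrow> real^'i \<Rightarrow> real^'i \<Rightarrow> (real \<Rightarrow> real^'i) \<Rightarrow>
   (real \<Rightarrow> real^'e) \<Rightarrow> (real \<Rightarrow> real^'i) \<Rightarrow> bool" where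
  "open_loop_sol y D Mv Ev p f w \<longleftrightarrow>
     continuous_on {0..} f \<and> continuous_on {0..} w \<and>
     (\<exists>S. locally_finite_set S \<and>
        (\<forall>t. t \<ge> 0 \<and> t \<notin> S \<longrightarrow>
           (\<forall>e. ((\<lambda>s. f s $ e) has_real_derivative (y $ e * (D *v w t) $ e)) (at t within {0..})) \<and>
           (\<forall>i. \<exists>w'. ((\<lambda>s. w s $ i) has_real_derivative w') (at t within {0..}) \<and>
                 Mv $ i * w' = - Ev $ i * w t $ i - (transpose D *v f t) $ i + p t $ i)))"

text \<open>Closed-loop solution (f, w, aM) with aM = alpha_MPC; total control alpha = alpha_DF + alpha_MPC.\<close>
definition closed_loop_sol ::
  "real^'e::finite \<Rightarrow> real^'i::finite^'e \<Rightarrow> real^'i \<Rightarrow> real^'i \<Rightarrow> (real \<Rightarrow> real^'i) \<Rightarrow>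
   'i set \<Rightarrow> 'i set \<Rightarrow>
   real \<Rightarrow> nat \<Rightarrow> ('i \<Rightarrow> real) \<Rightarrow> ('i \<Rightarrow> real) \<Rightarrow> ('i \<Rightarrow> real) \<Rightarrow> real \<Rightarrow>
   ('i \<Rightarrow> real) \<Rightarrow> ('i \<Rightarrow> real) \<Rightarrow>
   (nat \<Rightarrow> real) \<Rightarrow> (nat \<Rightarrow> real \<Rightarrow> real^'i) \<Rightarrow>
   ('i \<Rightarrow> real) \<Rightarrow> ('i \<Rightarrow> real) \<Rightarrow> ('i \<Rightarrow> real) \<Rightarrow> ('i \<Rightarrow> real) \<Rightarrow>
   (real \<Rightarrow> real^'e) \<Rightarrow> (real \<Rightarrow> real^'i) \<Rightarrow> (real \<Rightarrow> real^'i) \<Rightarrow> bool" where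
  "closed_loop_sol y D Mv Ev p Iu Iw T N c eps Tc d wlo whi \<Delta> pf wlt wht gl gh f w aM \<longleftrightarrow>
     continuous_on {0..} f \<and> continuous_on {0..} w \<and> continuous_on {0..} aM \<and>
     (\<forall>t\<ge>0. \<forall>i. i \<notin> Iu \<longrightarrow> aM t $ i = 0) \<and>
     (\<exists>S. locally_finite_set S \<and>
        (\<forall>t j. t \<ge> 0 \<and> t \<notin> S \<and> \<Delta> j \<le> t \<and> t < \<Delta> (Suc j) \<longrightarrow>
           (let uM = mpc_u T N y D Mv Ev Iu Iw Tc eps wlo whi c d
                        (\<lambda>k. pf j (\<Delta> j + real k * T)) (f (\<Delta> j)) (w (\<Delta> j)) (aM (\<Delta> j));
                aDF = alpha_df D Ev Iw wlo whi wlt wht gl gh (f t) (w t) (p t) (aM t)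
            in
           (\<forall>e. ((\<lambda>s. f s $ e) has_real_derivative (y $ e * (D *v w t) $ e)) (at t within {0..})) \<and>
           (\<forall>i. \<exists>w'. ((\<lambda>s. w s $ i) has_real_derivative w') (at t within {0..}) \<and>
                 Mv $ i * w' = - Ev $ i * w t $ i - (transpose D *v f t) $ i + p t $ i
                               + (aDF $ i + aM t $ i)) \<and>
           (\<forall>i\<in>Iu. ((\<lambda>s. aM s $ i) has_real_derivative
                 (- aM t $ i / Tc i - w t $ i + sat (eps i) (aM t $ i) (uM $ i))) (at t within {0..})))))"

end

theory Submission
  imports Defs
begin


lemma mvt_exc:
  fixes g :: "real \<Rightarrow> real"
  assumes "finite S" "a \<le> b" "continuous_on {a..b} g"
    "\<And>x. a < x \<Longrightarrow> x < b \<Longrightarrow> x \<notin> S \<Longrightarrow> \<exists>d. (g has_real_derivative d) (at x) \<and> d \<le> K"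
  shows "g b - g a \<le> K * (b - a)"
  using assms
proof (induction S arbitrary: a b rule: finite_induct)
  case empty
  have "(\<lambda>x. g x - K * x) a \<ge> (\<lambda>x. g x - K * x) b"
  proof (rule DERIV_nonpos_imp_decreasing_open[OF empty.prems(1)])
    fix x assume "a < x" "x < b"
    then obtain d where "(g has_real_derivative d) (at x)" "d \<le> K" using empty.prems(3) by blast
    then show "\<exists>y. ((\<lambda>x. g x - K * x) has_real_derivative y) (at x) \<and> y \<le> 0"
      by (intro exI[of _ "d - K"]) (auto intro!: derivative_eq_intros)
  qed (auto intro!: continuous_intros empty.prems(2))
  then show ?case by (simp add: algebra_simps)
next
  case (insert s S)
  show ?case
  proof (cases "a < s \<and> s < b")
    case True
    have 1: "g s - g a \<le> K * (s - a)"
      by (rule insert.IH) (use True insert.prems in \<open>auto intro: continuous_on_subset\<close>)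
    have 2: "g b - g s \<le> K * (b - s)"
      by (rule insert.IH) (use True insert.prems in \<open>auto intro: continuous_on_subset\<close>)
    show ?thesis using 1 2 by (simp add: algebra_simps)
  next
    case False
    show ?thesis
      by (rule insert.IH) (use False insert.prems in auto)
  qed
qed

lemma mvt_lf:
  fixes g :: "real \<Rightarrow> real"
  assumes "locally_finite_set S" "a \<le> b" "continuous_on {a..b} g"
    "\<And>x. a < x \<Longrightarrow> x < b \<Longrightarrow> x \<notin> S \<Longrightarrow> \<exists>d. (g has_real_derivative d) (at x) \<and> d \<le> K"
  shows "g b - g a \<le> K * (b - a)"
proof (rule mvt_exc[of "S \<inter> {a..b}"])
  show "finite (S \<inter> {a..b})" using assms(1) unfolding locally_finite_set_def by blast
  fix x assume "a < x" "x < b" "x \<notin> S \<inter> {a..b}"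
  then show "\<exists>d. (g has_real_derivative d) (at x) \<and> d \<le> K" using assms(4) by simp
qed (use assms(2,3) in auto)

lemma mvt_lf_abs:
  fixes g :: "real \<Rightarrow> real"
  assumes "locally_finite_set S" "a \<le> b" "continuous_on {a..b} g"
    "\<And>x. a < x \<Longrightarrow> x < b \<Longrightarrow> x \<notin> S \<Longrightarrow> \<exists>d. (g has_real_derivative d) (at x) \<and> \<bar>d\<bar> \<le> K"
  shows "\<bar>g b - g a\<bar> \<le> K * (b - a)"
proof -
  have 1: "g b - g a \<le> K * (b - a)"
    by (rule mvt_lf[OF assms(1-3)]) (use assms(4) in force)
  have "(\<lambda>x. - g x) b - (\<lambda>x. - g x) a \<le> K * (b - a)"
  proof (rule mvt_lf[OF assms(1,2)])
    show "continuous_on {a..b} (\<lambda>x. - g x)" using assms(3) by (intro continuous_intros)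
    fix x assume "a < x" "x < b" "x \<notin> S"
    then obtain d where "(g has_real_derivative d) (at x)" "\<bar>d\<bar> \<le> K" using assms(4) by blast
    then show "\<exists>d. ((\<lambda>x. - g x) has_real_derivative d) (at x) \<and> d \<le> K"
      by (intro exI[of _ "-d"]) (auto intro!: derivative_eq_intros)
  qed
  with 1 show ?thesis by linarith
qed

lemma tmv: "(transpose D *v (x::real^_)) $ i = (\<Sum>e\<in>UNIV. D $ e $ i * x $ e)"
  by (simp add: matrix_vector_mult_def transpose_def)

lemma vmv: "((x::real^_) v* D) $ i = (\<Sum>e\<in>UNIV. D $ e $ i * x $ e)"
  by (simp add: vector_matrix_mult_def mult.commute)

lemma mv: "(D *v x) $ e = (\<Sum>i\<in>UNIV. D $ e $ i * x $ i)"
  by (simp add: matrix_vector_mult_def)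

lemma dot_swap:
  fixes D :: "real^'i::finite^'e::finite"
  shows "(\<Sum>e\<in>UNIV. x $ e * (D *v w) $ e) = (\<Sum>i\<in>UNIV. w $ i * (transpose D *v x) $ i)"
proof -
  have "(\<Sum>e\<in>UNIV. x $ e * (D *v w) $ e) = (\<Sum>e\<in>UNIV. \<Sum>i\<in>UNIV. x $ e * D $ e $ i * w $ i)"
    by (simp add: mv sum_distrib_left mult.assoc)
  also have "\<dots> = (\<Sum>i\<in>UNIV. \<Sum>e\<in>UNIV. x $ e * D $ e $ i * w $ i)"
    by (rule sum.swap)
  also have "\<dots> = (\<Sum>i\<in>UNIV. w $ i * (transpose D *v x) $ i)"
    by (simp only: tmv) (simp add: sum_distrib_left mult_ac)
  finally show ?thesis .
qed

lemma finite_bound: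
  fixes h :: "'i::finite \<Rightarrow> 'x \<Rightarrow> real"
  assumes "\<And>i. \<exists>K. \<forall>x\<in>A. \<bar>h i x\<bar> \<le> K"
  shows "\<exists>K. \<forall>i. \<forall>x\<in>A. \<bar>h i x\<bar> \<le> K"
proof -
  obtain K where K: "\<And>i. \<forall>x\<in>A. \<bar>h i x\<bar> \<le> K i" using assms by metis
  have "K i \<le> (\<Sum>j\<in>UNIV. \<bar>K j\<bar>)" for i
    using member_le_sum[of i UNIV "\<lambda>j. \<bar>K j\<bar>"] by auto
  then show ?thesis using K by (intro exI[of _ "\<Sum>j\<in>UNIV. \<bar>K j\<bar>"]) (blast intro: order_trans)
qed

lemma abs_le_sq: "\<bar>x::real\<bar> \<le> 1 + x^2"
proof (cases "\<bar>x\<bar> \<le> 1")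
  case False
  then have "\<bar>x\<bar> * 1 \<le> \<bar>x\<bar> * \<bar>x\<bar>" by (intro mult_left_mono) auto
  then show ?thesis by (simp add: power2_eq_square abs_mult_self_eq)
qed (simp add: add_increasing2)

lemma sum_abs_bnd:
  fixes h c :: "'a \<Rightarrow> real"
  assumes "\<And>e. e \<in> A \<Longrightarrow> \<bar>h e\<bar> \<le> c e"
  shows "\<bar>\<Sum>e\<in>A. h e\<bar> \<le> (\<Sum>e\<in>A. c e)"
  by (rule order_trans[OF sum_abs sum_mono]) (rule assms)

lemma tmv_bnd:
  fixes D :: "real^'i::finite^'e::finite"
  assumes "\<And>e. \<bar>x$e\<bar> \<le> B"
  shows "\<bar>(transpose D *v x)$i\<bar> \<le> (\<Sum>e\<in>UNIV. \<bar>D$e$i\<bar> * B)"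
  unfolding tmv by (rule sum_abs_bnd) (auto simp: abs_mult intro!: mult_left_mono assms)

lemma mv_bnd:
  fixes D :: "real^'i::finite^'e::finite"
  assumes "\<And>i. \<bar>x$i\<bar> \<le> B"
  shows "\<bar>(D *v x)$e\<bar> \<le> (\<Sum>i\<in>UNIV. \<bar>D$e$i\<bar> * B)"
  unfolding mv by (rule sum_abs_bnd) (auto simp: abs_mult intro!: mult_left_mono assms)

lemma tendsto0_real:
  fixes q :: "'a \<Rightarrow> real"
  assumes "\<And>\<epsilon>. \<epsilon> > 0 \<Longrightarrow> eventually (\<lambda>t. \<bar>q t\<bar> < \<epsilon>) F"
  shows "(q \<longlongrightarrow> 0) F"
  using assms by (auto simp: tendsto_iff dist_real_def)

lemma ev_small:
  fixes q :: "'a \<Rightarrow> real"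
  assumes "(q \<longlongrightarrow> 0) F" "e > 0"
  shows "eventually (\<lambda>t. \<bar>q t\<bar> < e) F"
  using assms by (auto simp: tendsto_iff dist_real_def)

lemma Q_const:
  fixes D :: "real^'i::finite^'e::finite" and h :: "real \<Rightarrow> real^'e" and u :: "real \<Rightarrow> real^'i"
  assumes S: "locally_finite_set S" and ch: "continuous_on {c..} h"
    and dh: "\<And>t e. t > c \<Longrightarrow> t \<notin> S \<Longrightarrow> ((\<lambda>s. h s$e) has_real_derivative (y$e * (D *v u t)$e)) (at t)"
    and \<delta>: "transpose D *v \<delta> = 0" and y: "\<And>e. y$e \<noteq> 0" and t: "t \<ge> c"
  shows "(\<Sum>e\<in>UNIV. h t$e * \<delta>$e / y$e) = (\<Sum>e\<in>UNIV. h c$e * \<delta>$e / y$e)"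
proof -
  have "\<bar>(\<lambda>s. \<Sum>e\<in>UNIV. h s$e * \<delta>$e / y$e) t - (\<lambda>s. \<Sum>e\<in>UNIV. h s$e * \<delta>$e / y$e) c\<bar> \<le> 0 * (t - c)"
  proof (rule mvt_lf_abs[OF S t])
    show "continuous_on {c..t} (\<lambda>s. \<Sum>e\<in>UNIV. h s$e * \<delta>$e / y$e)"
      by (rule continuous_on_subset[of "{c..}"]) (auto intro!: continuous_intros ch simp: y)
    fix x assume x: "c < x" "x < t" "x \<notin> S"
    have "((\<lambda>s. \<Sum>e\<in>UNIV. h s$e * \<delta>$e / y$e) has_real_derivative
       (\<Sum>e\<in>UNIV. (y$e * (D *v u x)$e) * \<delta>$e / y$e)) (at x)"
      by (intro DERIV_sum DERIV_cdivide DERIV_cmult_right dh) (use x in auto)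
    moreover have "(\<Sum>e\<in>UNIV. (y$e * (D *v u x)$e) * \<delta>$e / y$e) = 0"
    proof -
      have "(\<Sum>e\<in>UNIV. (y$e * (D *v u x)$e) * \<delta>$e / y$e) = (\<Sum>e\<in>UNIV. \<delta>$e * (D *v u x)$e)"
        using y by (intro sum.cong) auto
      also have "\<dots> = (\<Sum>i\<in>UNIV. u x $ i * (transpose D *v \<delta>)$i)" by (rule dot_swap)
      also have "\<dots> = 0" using \<delta> by simp
      finally show ?thesis .
    qed
    ultimately show "\<exists>d. ((\<lambda>s. \<Sum>e\<in>UNIV. h s$e * \<delta>$e / y$e) has_real_derivative d) (at x) \<and> \<bar>d\<bar> \<le> 0"
      by force
  qed
  then show ?thesis by simp
qed

lemma filterlim_lin:
  assumes "\<And>n. \<tau> n \<ge> t0 + real n"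
  shows "filterlim \<tau> at_top sequentially"
  unfolding filterlim_at_top
proof
  fix Z :: real
  show "eventually (\<lambda>n. Z \<le> \<tau> n) sequentially"
    unfolding eventually_sequentially
  proof (intro exI[of _ "nat \<lceil>Z - t0\<rceil>"] allI impI)
    fix n assume "nat \<lceil>Z - t0\<rceil> \<le> n"
    then have "Z - t0 \<le> real n" by linarith
    then show "Z \<le> \<tau> n" using assms[of n] by linarith
  qed
qed




locale traj =
  fixes D :: "real^'i::finite^'e::finite" and y :: "real^'e" and Mv Ev ps :: "real^'i"
    and Iu :: "'i set" and Tc eps :: "'i \<Rightarrow> real" and fh :: "real^'e"
    and t0 :: real and S :: "real set" and G rho :: real
    and f :: "real \<Rightarrow> real^'e" and w a b :: "real \<Rightarrow> real^'i"
  assumes ypos: "\<And>e. y$e > 0" and Mpos: "\<And>i. Mv$i > 0" and Epos: "\<And>i. Ev$i > 0"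
    and Tpos: "\<And>i. i \<in> Iu \<Longrightarrow> Tc i > 0" and epos: "\<And>i. i \<in> Iu \<Longrightarrow> eps i \<ge> 0" and epsT: "\<And>i. i \<in> Iu \<Longrightarrow> eps i * Tc i < 1"
    and fh: "transpose D *v fh = ps"
    and cf: "continuous_on {t0..} f" and cw: "continuous_on {t0..} w" and ca: "continuous_on {t0..} a"
    and a0: "\<And>t i. t \<ge> t0 \<Longrightarrow> i \<notin> Iu \<Longrightarrow> a t $ i = 0"
    and Slf: "locally_finite_set S"
    and der_f: "\<And>t e. t > t0 \<Longrightarrow> t \<notin> S \<Longrightarrow> ((\<lambda>s. f s $ e) has_real_derivative (y$e * (D *v w t)$e)) (at t)"
    and der_w: "\<And>t i. t > t0 \<Longrightarrow> t \<notin> S \<Longrightarrow> \<exists>w'. ((\<lambda>s. w s $ i) has_real_derivative w') (at t) \<and>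
        Mv$i * w' = - Ev$i * w t$i - (transpose D *v f t)$i + ps$i + b t$i + a t$i"
    and der_a: "\<And>t i. t > t0 \<Longrightarrow> t \<notin> S \<Longrightarrow> i \<in> Iu \<Longrightarrow> \<exists>s. \<bar>s\<bar> \<le> eps i * \<bar>a t$i\<bar> \<and>
        ((\<lambda>s. a s $ i) has_real_derivative (- a t$i / Tc i - w t$i + s)) (at t)"
    and bsign: "\<And>t i. t \<ge> t0 \<Longrightarrow> w t$i * b t$i \<le> 0"
    and bbound: "\<And>t i. t \<ge> t0 \<Longrightarrow> \<bar>b t$i\<bar> \<le> G + \<bar>Ev$i * w t$i + (transpose D *v f t)$i - ps$i - a t$i\<bar>"
    and rho: "rho > 0" and bzero: "\<And>t i. t \<ge> t0 \<Longrightarrow> \<bar>w t$i\<bar> \<le> rho \<Longrightarrow> b t$i = 0"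
begin

definition V where
  "V t = (\<Sum>i\<in>UNIV. Mv$i * (w t$i)^2 / 2) + (\<Sum>e\<in>UNIV. (f t$e - fh$e)^2 / (2 * y$e))
       + (\<Sum>i\<in>Iu. (a t$i)^2 / 2)"

definition kap where
  "kap = Min (range (\<lambda>i. Ev$i) \<union> (\<lambda>i. 1 / Tc i - eps i) ` Iu)"

lemma Tc_gt: "i \<in> Iu \<Longrightarrow> 1 / Tc i - eps i > 0"
  using Tpos[of i] epsT[of i] by (simp add: field_simps)

lemma kap_pos: "kap > 0"
  unfolding kap_def using Epos Tc_gt by (subst Min_gr_iff) auto

lemma kap_E: "kap \<le> Ev$i"
  unfolding kap_def by (rule Min_le) auto

lemma kap_T: "i \<in> Iu \<Longrightarrow> kap \<le> 1 / Tc i - eps i"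
  unfolding kap_def by (rule Min_le) auto

lemma V_cont: "continuous_on {t0..} V"
  unfolding V_def by (intro continuous_intros cf cw ca) (use ypos in \<open>auto simp: less_le\<close>)

lemma V_nonneg: "V t \<ge> 0"
  unfolding V_def using Mpos ypos
  by (intro add_nonneg_nonneg sum_nonneg) (auto intro!: divide_nonneg_nonneg mult_nonneg_nonneg simp: less_imp_le)

lemma V_deriv:
  assumes t: "t > t0" "t \<notin> S"
  shows "\<exists>d. (V has_real_derivative d) (at t) \<and>
           d \<le> - kap * ((\<Sum>i\<in>UNIV. (w t$i)^2) + (\<Sum>i\<in>Iu. (a t$i)^2))"
proof -
  have "\<forall>i. \<exists>w'. ((\<lambda>s. w s $ i) has_real_derivative w') (at t) \<and>
        Mv$i * w' = - Ev$i * w t$i - (transpose D *v f t)$i + ps$i + b t$i + a t$i"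
    using der_w[OF t] by blast
  then obtain W where W: "\<And>i. ((\<lambda>s. w s $ i) has_real_derivative W i) (at t)"
     "\<And>i. Mv$i * W i = - Ev$i * w t$i - (transpose D *v f t)$i + ps$i + b t$i + a t$i"
    by metis
  have "\<forall>i. \<exists>s. i \<in> Iu \<longrightarrow> \<bar>s\<bar> \<le> eps i * \<bar>a t$i\<bar> \<and>
        ((\<lambda>s. a s $ i) has_real_derivative (- a t$i / Tc i - w t$i + s)) (at t)"
    using der_a[OF t] by blast
  then obtain A where A: "\<And>i. i \<in> Iu \<Longrightarrow> \<bar>A i\<bar> \<le> eps i * \<bar>a t$i\<bar>"
    "\<And>i. i \<in> Iu \<Longrightarrow> ((\<lambda>s. a s $ i) has_real_derivative (- a t$i / Tc i - w t$i + A i)) (at t)"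
    by metis
  define d where "d = (\<Sum>i\<in>UNIV. Mv$i * w t$i * W i) + (\<Sum>e\<in>UNIV. (f t$e - fh$e) * (D *v w t)$e)
       + (\<Sum>i\<in>Iu. a t$i * (- a t$i / Tc i - w t$i + A i))"
  have d1: "((\<lambda>s. \<Sum>i\<in>UNIV. Mv$i * (w s$i)^2 / 2) has_real_derivative (\<Sum>i\<in>UNIV. Mv$i * w t$i * W i)) (at t)"
    by (rule DERIV_sum) (auto intro!: derivative_eq_intros W(1))
  have d2: "((\<lambda>s. \<Sum>e\<in>UNIV. (f s$e - fh$e)^2 / (2 * y$e)) has_real_derivative
       (\<Sum>e\<in>UNIV. (f t$e - fh$e) * (D *v w t)$e)) (at t)"
  proof (rule DERIV_sum)
    fix e
    show "((\<lambda>s. (f s$e - fh$e)^2 / (2 * y$e)) has_real_derivative (f t$e - fh$e) * (D *v w t)$e) (at t)"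
      using ypos[of e] by (auto intro!: derivative_eq_intros der_f[OF t] simp: field_simps)
  qed
  have d3: "((\<lambda>s. \<Sum>i\<in>Iu. (a s$i)^2 / 2) has_real_derivative
       (\<Sum>i\<in>Iu. a t$i * (- a t$i / Tc i - w t$i + A i))) (at t)"
    by (rule DERIV_sum) (auto intro!: derivative_eq_intros A(2))
  have dV: "(V has_real_derivative d) (at t)"
    unfolding V_def[abs_def] d_def by (intro DERIV_add d1 d2 d3)
  have e1: "(\<Sum>i\<in>UNIV. Mv$i * w t$i * W i) =
      (\<Sum>i\<in>UNIV. w t$i * (- Ev$i * w t$i + b t$i)) + (\<Sum>i\<in>UNIV. w t$i * a t$i)
      - (\<Sum>i\<in>UNIV. w t$i * ((transpose D *v f t)$i - ps$i))"
  proof -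
    have "Mv$i * w t$i * W i = w t$i * (- Ev$i * w t$i + b t$i) + w t$i * a t$i
      - w t$i * ((transpose D *v f t)$i - ps$i)" for i
    proof -
      have "Mv$i * w t$i * W i = w t$i * (Mv$i * W i)" by simp
      also have "\<dots> = w t$i * (- Ev$i * w t$i - (transpose D *v f t)$i + ps$i + b t$i + a t$i)"
        by (simp only: W(2))
      finally show ?thesis by (simp add: algebra_simps)
    qed
    then show ?thesis by (simp add: sum_subtractf[symmetric] sum.distrib[symmetric])
  qed
  have e2: "(\<Sum>e\<in>UNIV. (f t$e - fh$e) * (D *v w t)$e) = (\<Sum>i\<in>UNIV. w t$i * ((transpose D *v f t)$i - ps$i))"
  proof -
    have "(\<Sum>e\<in>UNIV. (f t$e - fh$e) * (D *v w t)$e) = (\<Sum>e\<in>UNIV. (f t - fh)$e * (D *v w t)$e)" by simp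
    also have "\<dots> = (\<Sum>i\<in>UNIV. w t$i * (transpose D *v (f t - fh))$i)" by (rule dot_swap)
    also have "\<dots> = (\<Sum>i\<in>UNIV. w t$i * ((transpose D *v f t)$i - ps$i))"
      by (simp only: matrix_vector_mult_diff_distrib fh) simp
    finally show ?thesis .
  qed
  have e3: "(\<Sum>i\<in>UNIV. w t$i * a t$i) = (\<Sum>i\<in>Iu. w t$i * a t$i)"
    by (rule sum.mono_neutral_right) (use a0 t in auto)
  have e4: "(\<Sum>i\<in>Iu. a t$i * (- a t$i / Tc i - w t$i + A i)) =
     (\<Sum>i\<in>Iu. a t$i * (- a t$i / Tc i + A i)) - (\<Sum>i\<in>Iu. w t$i * a t$i)"
    by (simp add: sum_subtractf[symmetric] algebra_simps)
  have dd: "d = (\<Sum>i\<in>UNIV. w t$i * (- Ev$i * w t$i + b t$i)) + (\<Sum>i\<in>Iu. a t$i * (- a t$i / Tc i + A i))"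
    unfolding d_def e1 e2 e4 e3 by simp
  have b1: "(\<Sum>i\<in>UNIV. w t$i * (- Ev$i * w t$i + b t$i)) \<le> (\<Sum>i\<in>UNIV. - kap * (w t$i)^2)"
  proof (rule sum_mono)
    fix i
    have "kap * (w t$i)^2 \<le> Ev$i * (w t$i)^2" using kap_E[of i] by (intro mult_right_mono) auto
    then show "w t$i * (- Ev$i * w t$i + b t$i) \<le> - kap * (w t$i)^2"
      using bsign[of t i] t by (simp add: algebra_simps power2_eq_square)
  qed
  have b2: "(\<Sum>i\<in>Iu. a t$i * (- a t$i / Tc i + A i)) \<le> (\<Sum>i\<in>Iu. - kap * (a t$i)^2)"
  proof (rule sum_mono)
    fix i assume i: "i \<in> Iu"
    have "a t$i * A i \<le> \<bar>a t$i\<bar> * \<bar>A i\<bar>" by (simp add: abs_mult[symmetric])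
    also have "\<dots> \<le> \<bar>a t$i\<bar> * (eps i * \<bar>a t$i\<bar>)" using A(1)[OF i] by (intro mult_left_mono) auto
    also have "\<dots> = eps i * (a t$i)^2" by (simp add: power2_eq_square abs_mult_self_eq)
    finally have 1: "a t$i * A i \<le> eps i * (a t$i)^2" .
    have "kap * (a t$i)^2 \<le> (1 / Tc i - eps i) * (a t$i)^2" using kap_T[OF i] by (intro mult_right_mono) auto
    then show "a t$i * (- a t$i / Tc i + A i) \<le> - kap * (a t$i)^2"
      using 1 by (simp add: algebra_simps power2_eq_square)
  qed
  have "d \<le> - kap * ((\<Sum>i\<in>UNIV. (w t$i)^2) + (\<Sum>i\<in>Iu. (a t$i)^2))"
    using b1 b2 unfolding dd by (simp add: sum_distrib_left[symmetric] algebra_simps sum_negf)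
  with dV show ?thesis by blast
qed

lemma sumsq_nonneg: "0 \<le> (\<Sum>i\<in>UNIV. (w t$i)^2) + (\<Sum>i\<in>Iu. (a t$i)^2)"
  by (intro add_nonneg_nonneg sum_nonneg) auto

lemma V_drop:
  assumes "t0 \<le> s" "s \<le> t" "\<And>x. s < x \<Longrightarrow> x < t \<Longrightarrow> c \<le> (\<Sum>i\<in>UNIV. (w x$i)^2) + (\<Sum>i\<in>Iu. (a x$i)^2)"
  shows "V t - V s \<le> - kap * c * (t - s)"
proof (rule mvt_lf[OF Slf assms(2)])
  show "continuous_on {s..t} V" using V_cont by (rule continuous_on_subset) (use assms in auto)
  fix x assume x: "s < x" "x < t" "x \<notin> S"
  then obtain d where d: "(V has_real_derivative d) (at x)"
    "d \<le> - kap * ((\<Sum>i\<in>UNIV. (w x$i)^2) + (\<Sum>i\<in>Iu. (a x$i)^2))"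
    using V_deriv[of x] assms(1) by force
  have "kap * c \<le> kap * ((\<Sum>i\<in>UNIV. (w x$i)^2) + (\<Sum>i\<in>Iu. (a x$i)^2))"
    using kap_pos assms(3)[OF x(1,2)] by (intro mult_left_mono) auto
  with d show "\<exists>d. (V has_real_derivative d) (at x) \<and> d \<le> - kap * c" by force
qed

lemma V_mono: "t0 \<le> s \<Longrightarrow> s \<le> t \<Longrightarrow> V t \<le> V s"
  using V_drop[of s t 0] sumsq_nonneg by force

lemma V_cauchy:
  assumes "\<eta> > 0"
  shows "\<exists>T\<ge>t0. \<forall>s t. T \<le> s \<longrightarrow> s \<le> t \<longrightarrow> V s - V t < \<eta>"
proof -
  define m where "m = Inf (V ` {t0..})"
  have bdd: "bdd_below (V ` {t0..})" using V_nonneg by (intro bdd_belowI[of _ 0]) auto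
  have "\<exists>x\<in>V ` {t0..}. x < m + \<eta>"
    unfolding m_def by (rule cInf_lessD) (use assms in auto)
  then obtain T where T: "T \<ge> t0" "V T < m + \<eta>" by auto
  have "V s - V t < \<eta>" if "T \<le> s" "s \<le> t" for s t
  proof -
    have "V s \<le> V T" using V_mono that T by auto
    moreover have "m \<le> V t" unfolding m_def using bdd that T by (intro cInf_lower) auto
    ultimately show ?thesis using T by linarith
  qed
  with T show ?thesis by blast
qed

lemma V_le0: "t \<ge> t0 \<Longrightarrow> V t \<le> V t0"
  using V_mono by auto

lemma w_sq: "Mv$i * (w t$i)^2 / 2 \<le> V t"
proof -
  have "Mv$i * (w t$i)^2 / 2 \<le> (\<Sum>i\<in>UNIV. Mv$i * (w t$i)^2 / 2)"
    by (rule member_le_sum) (use Mpos in \<open>auto intro!: divide_nonneg_nonneg mult_nonneg_nonneg simp: less_imp_le\<close>)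
  moreover have "0 \<le> (\<Sum>e\<in>UNIV. (f t$e - fh$e)^2 / (2 * y$e))"
    using ypos by (intro sum_nonneg) (auto intro!: divide_nonneg_nonneg simp: less_imp_le)
  moreover have "0 \<le> (\<Sum>i\<in>Iu. (a t$i)^2 / 2)" by (intro sum_nonneg) auto
  ultimately show ?thesis unfolding V_def by linarith
qed

lemma f_sq: "(f t$e - fh$e)^2 / (2 * y$e) \<le> V t"
proof -
  have "(f t$e - fh$e)^2 / (2 * y$e) \<le> (\<Sum>e\<in>UNIV. (f t$e - fh$e)^2 / (2 * y$e))"
    by (rule member_le_sum) (use ypos in \<open>auto intro!: divide_nonneg_nonneg simp: less_imp_le\<close>)
  moreover have "0 \<le> (\<Sum>i\<in>UNIV. Mv$i * (w t$i)^2 / 2)"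
    using Mpos by (intro sum_nonneg) (auto intro!: divide_nonneg_nonneg mult_nonneg_nonneg simp: less_imp_le)
  moreover have "0 \<le> (\<Sum>i\<in>Iu. (a t$i)^2 / 2)" by (intro sum_nonneg) auto
  ultimately show ?thesis unfolding V_def by linarith
qed

lemma a_sq: "i \<in> Iu \<Longrightarrow> (a t$i)^2 / 2 \<le> V t"
proof -
  assume i: "i \<in> Iu"
  have "(a t$i)^2 / 2 \<le> (\<Sum>i\<in>Iu. (a t$i)^2 / 2)"
    by (rule member_le_sum) (use i in auto)
  moreover have "0 \<le> (\<Sum>i\<in>UNIV. Mv$i * (w t$i)^2 / 2)"
    using Mpos by (intro sum_nonneg) (auto intro!: divide_nonneg_nonneg mult_nonneg_nonneg simp: less_imp_le)
  moreover have "0 \<le> (\<Sum>e\<in>UNIV. (f t$e - fh$e)^2 / (2 * y$e))"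
    using ypos by (intro sum_nonneg) (auto intro!: divide_nonneg_nonneg simp: less_imp_le)
  ultimately show ?thesis unfolding V_def by linarith
qed

lemma w_bnd: "\<exists>B. \<forall>i. \<forall>t\<in>{t0..}. \<bar>w t$i\<bar> \<le> B"
proof (rule finite_bound)
  fix i
  have "\<bar>w t$i\<bar> \<le> 1 + 2 * V t0 / Mv$i" if "t \<in> {t0..}" for t
  proof -
    have "Mv$i * (w t$i)^2 \<le> 2 * V t0" using w_sq[of i t] V_le0[of t] that by auto
    then have "(w t$i)^2 \<le> 2 * V t0 / Mv$i" using Mpos[of i] by (simp add: field_simps)
    then show ?thesis using abs_le_sq[of "w t$i"] by linarith
  qed
  then show "\<exists>K. \<forall>t\<in>{t0..}. \<bar>w t$i\<bar> \<le> K" by blast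
qed

lemma f_bnd: "\<exists>B. \<forall>e. \<forall>t\<in>{t0..}. \<bar>f t$e\<bar> \<le> B"
proof (rule finite_bound)
  fix e
  have "\<bar>f t$e\<bar> \<le> \<bar>fh$e\<bar> + 1 + 2 * y$e * V t0" if "t \<in> {t0..}" for t
  proof -
    have "(f t$e - fh$e)^2 \<le> 2 * y$e * V t" using f_sq[of t e] ypos[of e]
      by (simp add: field_simps)
    also have "\<dots> \<le> 2 * y$e * V t0" using V_le0[of t] that ypos[of e] by (intro mult_left_mono) auto
    finally have "(f t$e - fh$e)^2 \<le> 2 * y$e * V t0" .
    then have "\<bar>f t$e - fh$e\<bar> \<le> 1 + 2 * y$e * V t0" using abs_le_sq[of "f t$e - fh$e"] by linarith
    then show ?thesis by linarith
  qed
  then show "\<exists>K. \<forall>t\<in>{t0..}. \<bar>f t$e\<bar> \<le> K" by blast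
qed

lemma a_bnd: "\<exists>B. \<forall>i. \<forall>t\<in>{t0..}. \<bar>a t$i\<bar> \<le> B"
proof (rule finite_bound)
  fix i
  have "\<bar>a t$i\<bar> \<le> 1 + 2 * V t0" if "t \<in> {t0..}" for t
  proof (cases "i \<in> Iu")
    case True
    have "(a t$i)^2 \<le> 2 * V t0" using a_sq[OF True, of t] V_le0[of t] that by auto
    then show ?thesis using abs_le_sq[of "a t$i"] by linarith
  next
    case False
    then show ?thesis using a0[of t i] that V_nonneg[of t0] by auto
  qed
  then show "\<exists>K. \<forall>t\<in>{t0..}. \<bar>a t$i\<bar> \<le> K" by blast
qed

lemma Df_bnd: "\<exists>C. \<forall>i. \<forall>t\<in>{t0..}. \<bar>(transpose D *v f t)$i\<bar> \<le> C"
proof (rule finite_bound)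
  fix i
  obtain B where B: "\<forall>e. \<forall>t\<in>{t0..}. \<bar>f t$e\<bar> \<le> B" using f_bnd by blast
  have "\<bar>(transpose D *v f t)$i\<bar> \<le> (\<Sum>e\<in>UNIV. \<bar>D$e$i\<bar> * B)" if "t \<in> {t0..}" for t
    by (rule tmv_bnd) (use B that in auto)
  then show "\<exists>K. \<forall>t\<in>{t0..}. \<bar>(transpose D *v f t)$i\<bar> \<le> K" by blast
qed

lemma w_lip: "\<exists>K>0. \<forall>s t. t0 \<le> s \<longrightarrow> s \<le> t \<longrightarrow> \<bar>w t$i - w s$i\<bar> \<le> K * (t - s)"
proof -
  obtain Bw where Bw: "\<forall>i. \<forall>t\<in>{t0..}. \<bar>w t$i\<bar> \<le> Bw" using w_bnd by blast
  obtain Ba where Ba: "\<forall>i. \<forall>t\<in>{t0..}. \<bar>a t$i\<bar> \<le> Ba" using a_bnd by blast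
  obtain C where C: "\<forall>i. \<forall>t\<in>{t0..}. \<bar>(transpose D *v f t)$i\<bar> \<le> C" using Df_bnd by blast
  define N where "N = Ev$i * Bw + C + \<bar>ps$i\<bar> + (\<bar>G\<bar> + Ev$i * Bw + C + \<bar>ps$i\<bar> + Ba) + Ba"
  define K where "K = \<bar>N / Mv$i\<bar> + 1"
  have K: "K > 0" unfolding K_def using abs_ge_zero[of "N / Mv$i"] by linarith
  have dK: "\<exists>d. ((\<lambda>s. w s $ i) has_real_derivative d) (at x) \<and> \<bar>d\<bar> \<le> K" if x: "x > t0" "x \<notin> S" for x
  proof -
    obtain W where W: "((\<lambda>s. w s $ i) has_real_derivative W) (at x)"
      "Mv$i * W = - Ev$i * w x$i - (transpose D *v f x)$i + ps$i + b x$i + a x$i"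
      using der_w[OF x] by blast
    have x0: "x \<in> {t0..}" using x by auto
    have h1: "\<bar>w x$i\<bar> \<le> Bw" "\<bar>a x$i\<bar> \<le> Ba" "\<bar>(transpose D *v f x)$i\<bar> \<le> C"
      using Bw Ba C x0 by auto
    have h2: "\<bar>b x$i\<bar> \<le> G + \<bar>Ev$i * w x$i + (transpose D *v f x)$i - ps$i - a x$i\<bar>"
      using bbound[of x i] x by auto
    have h3: "\<bar>Ev$i * w x$i\<bar> \<le> Ev$i * Bw"
      using h1(1) Epos[of i] by (simp add: abs_mult mult_left_mono)
    have "\<bar>Mv$i * W\<bar> \<le> N" unfolding W(2) N_def using h1 h2 h3 
      by (smt (verit) minus_mult_left[of "Ev$i" "w x$i"])
    then have "\<bar>W\<bar> \<le> N / Mv$i" using Mpos[of i] by (simp add: abs_mult field_simps)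
    then have "\<bar>W\<bar> \<le> K" using abs_ge_self[of "N / Mv$i"] unfolding K_def by linarith
    then show ?thesis using W(1) by blast
  qed
  have "\<bar>w t$i - w s$i\<bar> \<le> K * (t - s)" if "t0 \<le> s" "s \<le> t" for s t
  proof (rule mvt_lf_abs[OF Slf that(2)])
    show "continuous_on {s..t} (\<lambda>x. w x $ i)"
      by (rule continuous_on_subset[of "{t0..}"]) (use that in \<open>auto intro!: continuous_intros cw\<close>)
  qed (use dK that in auto)
  with K show ?thesis by blast
qed

lemma a_lip: "\<exists>K>0. \<forall>s t. t0 \<le> s \<longrightarrow> s \<le> t \<longrightarrow> \<bar>a t$i - a s$i\<bar> \<le> K * (t - s)"
proof (cases "i \<in> Iu")
  case False
  then show ?thesis using a0 by (intro exI[of _ 1]) auto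
next
  case True
  obtain Bw where Bw: "\<forall>i. \<forall>t\<in>{t0..}. \<bar>w t$i\<bar> \<le> Bw" using w_bnd by blast
  obtain Ba where Ba: "\<forall>i. \<forall>t\<in>{t0..}. \<bar>a t$i\<bar> \<le> Ba" using a_bnd by blast
  define K where "K = Ba / Tc i + Bw + eps i * Ba + 1"
  have "\<bar>a t0$i\<bar> \<le> Ba" "\<bar>w t0$i\<bar> \<le> Bw" using Ba Bw by auto
  then have Bpos: "Ba \<ge> 0" "Bw \<ge> 0" by (auto intro: order_trans[OF abs_ge_zero])
  have epos: "eps i \<ge> 0" using epos[OF True] .
  have K: "K > 0" unfolding K_def using Bpos Tpos[OF True] epos by (auto intro!: add_nonneg_pos)
  have dK: "\<exists>d. ((\<lambda>s. a s $ i) has_real_derivative d) (at x) \<and> \<bar>d\<bar> \<le> K" if x: "x > t0" "x \<notin> S" for x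
  proof -
    obtain s where s: "\<bar>s\<bar> \<le> eps i * \<bar>a x$i\<bar>"
       "((\<lambda>s. a s $ i) has_real_derivative (- a x$i / Tc i - w x$i + s)) (at x)"
      using der_a[OF x True] by blast
    have x0: "x \<in> {t0..}" using x by auto
    have h1: "\<bar>w x$i\<bar> \<le> Bw" "\<bar>a x$i\<bar> \<le> Ba" using Bw Ba x0 by auto
    have h2: "\<bar>a x$i / Tc i\<bar> \<le> Ba / Tc i" using h1(2) Tpos[OF True] by (simp add: field_simps abs_divide)
    have h3: "eps i * \<bar>a x$i\<bar> \<le> eps i * Ba" using h1(2) epos by (intro mult_left_mono) auto
    have "\<bar>- a x$i / Tc i - w x$i + s\<bar> \<le> K" unfolding K_def using h1 h2 h3 s(1)
      by (smt (verit) minus_divide_left[of "a x$i" "Tc i"])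
    then show ?thesis using s(2) by blast
  qed
  have "\<bar>a t$i - a s$i\<bar> \<le> K * (t - s)" if "t0 \<le> s" "s \<le> t" for s t
  proof (rule mvt_lf_abs[OF Slf that(2)])
    show "continuous_on {s..t} (\<lambda>x. a x $ i)"
      by (rule continuous_on_subset[of "{t0..}"]) (use that in \<open>auto intro!: continuous_intros ca\<close>)
  qed (use dK that in auto)
  with K show ?thesis by blast
qed

lemma g_cont: "continuous_on {t0..} (\<lambda>t. (transpose D *v f t)$i)"
  unfolding tmv by (intro continuous_intros cf)

lemma g_lip: "\<exists>K>0. \<forall>s t. t0 \<le> s \<longrightarrow> s \<le> t \<longrightarrow>
   \<bar>(transpose D *v f t)$i - (transpose D *v f s)$i\<bar> \<le> K * (t - s)"
proof -
  obtain Bw where Bw: "\<forall>i. \<forall>t\<in>{t0..}. \<bar>w t$i\<bar> \<le> Bw" using w_bnd by blast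
  define K where "K = (\<Sum>e\<in>UNIV. \<bar>D$e$i\<bar> * (y$e * (\<Sum>j\<in>UNIV. \<bar>D$e$j\<bar> * Bw))) + 1"
  have "\<bar>w t0$i\<bar> \<le> Bw" using Bw by auto
  then have Bpos: "Bw \<ge> 0" by (auto intro: order_trans[OF abs_ge_zero])
  have K: "K > 0" unfolding K_def using ypos Bpos
    by (intro add_nonneg_pos sum_nonneg mult_nonneg_nonneg) (auto simp: less_imp_le)
  have dK: "\<exists>d. ((\<lambda>s. (transpose D *v f s)$i) has_real_derivative d) (at x) \<and> \<bar>d\<bar> \<le> K"
    if x: "x > t0" "x \<notin> S" for x
  proof -
    have "((\<lambda>s. \<Sum>e\<in>UNIV. D$e$i * f s$e) has_real_derivative
         (\<Sum>e\<in>UNIV. D$e$i * (y$e * (D *v w x)$e))) (at x)"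
      by (intro DERIV_sum DERIV_cmult der_f[OF x])
    moreover have "\<bar>\<Sum>e\<in>UNIV. D$e$i * (y$e * (D *v w x)$e)\<bar> \<le> K"
    proof -
      have "\<bar>\<Sum>e\<in>UNIV. D$e$i * (y$e * (D *v w x)$e)\<bar> \<le> (\<Sum>e\<in>UNIV. \<bar>D$e$i\<bar> * (y$e * (\<Sum>j\<in>UNIV. \<bar>D$e$j\<bar> * Bw)))"
      proof (rule sum_abs_bnd)
        fix e
        have "\<bar>(D *v w x)$e\<bar> \<le> (\<Sum>j\<in>UNIV. \<bar>D$e$j\<bar> * Bw)"
          by (rule mv_bnd) (use Bw x in auto)
        then have "y$e * \<bar>(D *v w x)$e\<bar> \<le> y$e * (\<Sum>j\<in>UNIV. \<bar>D$e$j\<bar> * Bw)"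
          using ypos[of e] by (intro mult_left_mono) auto
        then show "\<bar>D$e$i * (y$e * (D *v w x)$e)\<bar> \<le> \<bar>D$e$i\<bar> * (y$e * (\<Sum>j\<in>UNIV. \<bar>D$e$j\<bar> * Bw))"
          using ypos[of e] by (auto simp: abs_mult intro!: mult_left_mono)
      qed
      then show ?thesis unfolding K_def by linarith
    qed
    ultimately show ?thesis unfolding tmv by blast
  qed
  have "\<bar>(transpose D *v f t)$i - (transpose D *v f s)$i\<bar> \<le> K * (t - s)" if "t0 \<le> s" "s \<le> t" for s t
  proof (rule mvt_lf_abs[OF Slf that(2)])
    show "continuous_on {s..t} (\<lambda>x. (transpose D *v f x)$i)"
      by (rule continuous_on_subset[OF g_cont]) (use that in auto)
  qed (use dK that in auto)
  with K show ?thesis by blast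
qed

lemma decay:
  fixes q :: "real \<Rightarrow> real"
  assumes lip: "\<exists>K>0. \<forall>s t. t0 \<le> s \<longrightarrow> s \<le> t \<longrightarrow> \<bar>q t - q s\<bar> \<le> K * (t - s)"
    and dom: "\<And>t. t \<ge> t0 \<Longrightarrow> (q t)^2 \<le> (\<Sum>i\<in>UNIV. (w t$i)^2) + (\<Sum>i\<in>Iu. (a t$i)^2)"
  shows "(q \<longlongrightarrow> 0) at_top"
proof (rule tendsto0_real)
  fix \<epsilon> :: real assume \<epsilon>: "\<epsilon> > 0"
  obtain K where K: "K > 0" "\<And>s t. t0 \<le> s \<Longrightarrow> s \<le> t \<Longrightarrow> \<bar>q t - q s\<bar> \<le> K * (t - s)"
    using lip by blast
  define \<delta> where "\<delta> = \<epsilon> / (2 * K)"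
  define c where "c = (\<epsilon> / 2)^2"
  have \<delta>: "\<delta> > 0" "K * \<delta> = \<epsilon> / 2" unfolding \<delta>_def using K \<epsilon> by auto
  have c: "c > 0" unfolding c_def using \<epsilon> by auto
  obtain T where T: "T \<ge> t0" "\<And>s t. T \<le> s \<Longrightarrow> s \<le> t \<Longrightarrow> V s - V t < kap * c * \<delta>"
    using V_cauchy[of "kap * c * \<delta>"] kap_pos c \<delta> by auto
  show "eventually (\<lambda>t. \<bar>q t\<bar> < \<epsilon>) at_top"
    unfolding eventually_at_top_linorder
  proof (intro exI[of _ T] allI impI)
    fix t assume t: "t \<ge> T"
    show "\<bar>q t\<bar> < \<epsilon>"
    proof (rule ccontr)
      assume "\<not> \<bar>q t\<bar> < \<epsilon>"
      then have qt: "\<bar>q t\<bar> \<ge> \<epsilon>" by simp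
      have "V (t + \<delta>) - V t \<le> - kap * c * (t + \<delta> - t)"
      proof (rule V_drop)
        fix x assume x: "t < x" "x < t + \<delta>"
        have "\<bar>q x - q t\<bar> \<le> K * (x - t)" using K(2)[of t x] x t T by auto
        also have "\<dots> \<le> K * \<delta>" using x K by (intro mult_left_mono) auto
        finally have "\<bar>q x\<bar> \<ge> \<epsilon> / 2" using qt \<delta> by linarith
        then have "c \<le> \<bar>q x\<bar>^2" unfolding c_def using \<epsilon> by (intro power_mono) auto
        then have "c \<le> (q x)^2" by simp
        also have "\<dots> \<le> (\<Sum>i\<in>UNIV. (w x$i)^2) + (\<Sum>i\<in>Iu. (a x$i)^2)" using dom[of x] x t T by auto
        finally show "c \<le> (\<Sum>i\<in>UNIV. (w x$i)^2) + (\<Sum>i\<in>Iu. (a x$i)^2)" .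
      qed (use t T \<delta> in auto)
      moreover have "V t - V (t + \<delta>) < kap * c * \<delta>" using T(2)[of t "t + \<delta>"] t \<delta> by auto
      ultimately show False by simp
    qed
  qed
qed

lemma w_lim: "(w \<longlongrightarrow> 0) at_top"
proof (rule vec_tendstoI)
  fix i
  have "((\<lambda>t. w t$i) \<longlongrightarrow> 0) at_top"
  proof (rule decay[OF w_lip])
    fix t
    have "(w t$i)^2 \<le> (\<Sum>i\<in>UNIV. (w t$i)^2)" by (rule member_le_sum) auto
    moreover have "0 \<le> (\<Sum>i\<in>Iu. (a t$i)^2)" by (intro sum_nonneg) auto
    ultimately show "(w t$i)^2 \<le> (\<Sum>i\<in>UNIV. (w t$i)^2) + (\<Sum>i\<in>Iu. (a t$i)^2)" by linarith
  qed
  then show "((\<lambda>t. w t$i) \<longlongrightarrow> 0$i) at_top" by simp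
qed

lemma a_lim: "(a \<longlongrightarrow> 0) at_top"
proof (rule vec_tendstoI)
  fix i
  have "((\<lambda>t. a t$i) \<longlongrightarrow> 0) at_top"
  proof (cases "i \<in> Iu")
    case True
    show ?thesis
    proof (rule decay[OF a_lip])
      fix t
      have "(a t$i)^2 \<le> (\<Sum>i\<in>Iu. (a t$i)^2)" by (rule member_le_sum) (use True in auto)
      moreover have "0 \<le> (\<Sum>i\<in>UNIV. (w t$i)^2)" by (intro sum_nonneg) auto
      ultimately show "(a t$i)^2 \<le> (\<Sum>i\<in>UNIV. (w t$i)^2) + (\<Sum>i\<in>Iu. (a t$i)^2)" by linarith
    qed
  next
    case False
    have "eventually (\<lambda>t. a t$i = 0) at_top"
      unfolding eventually_at_top_linorder using a0 False by blast
    then show ?thesis by (rule tendsto_eventually)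
  qed
  then show "((\<lambda>t. a t$i) \<longlongrightarrow> 0$i) at_top" by simp
qed

lemma w_small: "eventually (\<lambda>t. \<forall>i. \<bar>w t$i\<bar> < r) at_top" if "r > 0"
proof -
  have "eventually (\<lambda>t. \<bar>w t$i\<bar> < r) at_top" for i
    using tendsto_vec_nth[OF w_lim, of i] that by (auto simp: tendsto_iff dist_real_def)
  then show ?thesis by (simp add: eventually_all_finite)
qed

lemma b_zero_ev: "eventually (\<lambda>t. b t = 0) at_top"
proof -
  have "eventually (\<lambda>t. (\<forall>i. \<bar>w t$i\<bar> < rho) \<and> t \<ge> t0) at_top"
    using w_small[OF rho] eventually_ge_at_top[of t0] by (rule eventually_conj)
  then show ?thesis
    by (rule eventually_mono) (auto simp: vec_eq_iff intro!: bzero less_imp_le)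
qed

lemma b_lim: "(b \<longlongrightarrow> 0) at_top"
  using b_zero_ev by (rule tendsto_eventually)

lemma g_lim: "((\<lambda>t. (transpose D *v f t)$i) \<longlongrightarrow> ps$i) at_top"
proof -
  have "((\<lambda>t. (transpose D *v f t)$i - ps$i) \<longlongrightarrow> 0) at_top"
  proof (rule tendsto0_real)
    fix \<epsilon> :: real assume \<epsilon>: "\<epsilon> > 0"
    obtain K where K: "K > 0" "\<And>s t. t0 \<le> s \<Longrightarrow> s \<le> t \<Longrightarrow>
        \<bar>(transpose D *v f t)$i - (transpose D *v f s)$i\<bar> \<le> K * (t - s)"
      using g_lip[of i] by blast
    define \<delta> where "\<delta> = \<epsilon> / (2 * K)"
    have \<delta>: "\<delta> > 0" "K * \<delta> = \<epsilon> / 2" unfolding \<delta>_def using K \<epsilon> by auto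
    define \<eta> where "\<eta> = \<epsilon> * \<delta> / (8 * Mv$i)"
    have \<eta>: "\<eta> > 0" unfolding \<eta>_def using \<epsilon> \<delta> Mpos[of i] by auto
    have ev1: "eventually (\<lambda>t. \<bar>w t$i\<bar> < \<eta>) at_top"
      using tendsto_vec_nth[OF w_lim, of i] \<eta> by (auto simp: tendsto_iff dist_real_def)
    have ev2: "eventually (\<lambda>t. \<bar>Ev$i * w t$i\<bar> < \<epsilon> / 8) at_top"
    proof -
      have "((\<lambda>t. Ev$i * w t$i) \<longlongrightarrow> Ev$i * 0) at_top"
        by (intro tendsto_mult tendsto_const) (use tendsto_vec_nth[OF w_lim, of i] in simp)
      then show ?thesis using \<epsilon> by (intro ev_small) auto
    qed
    have ev3: "eventually (\<lambda>t. \<bar>a t$i\<bar> < \<epsilon> / 8) at_top"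
      using tendsto_vec_nth[OF a_lim, of i] \<epsilon> by (intro ev_small) auto
    have "eventually (\<lambda>t. \<bar>w t$i\<bar> < \<eta> \<and> \<bar>Ev$i * w t$i\<bar> < \<epsilon> / 8 \<and> \<bar>a t$i\<bar> < \<epsilon> / 8 \<and> b t = 0 \<and> t \<ge> t0) at_top"
      by (intro eventually_conj ev1 ev2 ev3 b_zero_ev eventually_ge_at_top)
    then obtain T where T: "\<And>t. t \<ge> T \<Longrightarrow> \<bar>w t$i\<bar> < \<eta> \<and> \<bar>Ev$i * w t$i\<bar> < \<epsilon> / 8 \<and> \<bar>a t$i\<bar> < \<epsilon> / 8 \<and> b t = 0 \<and> t \<ge> t0"
      unfolding eventually_at_top_linorder by blast
    show "eventually (\<lambda>t. \<bar>(transpose D *v f t)$i - ps$i\<bar> < \<epsilon>) at_top"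
      unfolding eventually_at_top_linorder
    proof (intro exI[of _ T] allI impI)
      fix t assume t: "t \<ge> T"
      show "\<bar>(transpose D *v f t)$i - ps$i\<bar> < \<epsilon>"
      proof (rule ccontr)
        assume "\<not> ?thesis"
        then have gt: "\<bar>(transpose D *v f t)$i - ps$i\<bar> \<ge> \<epsilon>" by simp
        define \<sigma> :: real where "\<sigma> = (if (transpose D *v f t)$i - ps$i \<ge> 0 then 1 else -1)"
        have \<sigma>1: "\<bar>\<sigma>\<bar> = 1" unfolding \<sigma>_def by auto
        have \<sigma>g: "\<sigma> * ((transpose D *v f t)$i - ps$i) = \<bar>(transpose D *v f t)$i - ps$i\<bar>"
          unfolding \<sigma>_def by auto
        have sz: "\<sigma> * z \<le> \<bar>z\<bar>" "- (\<sigma> * z) \<le> \<bar>z\<bar>" for z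
          using \<sigma>1 abs_ge_self[of "\<sigma> * z"] abs_ge_minus_self[of "\<sigma> * z"] by (auto simp: abs_mult)
        have Tt: "t0 \<le> t" using T[OF t] by auto
        have "(\<lambda>s. \<sigma> * w s$i) (t + \<delta>) - (\<lambda>s. \<sigma> * w s$i) t \<le> (- \<epsilon> / (4 * Mv$i)) * (t + \<delta> - t)"
        proof (rule mvt_lf[OF Slf])
          show "continuous_on {t..t + \<delta>} (\<lambda>s. \<sigma> * w s$i)"
            by (rule continuous_on_subset[of "{t0..}"]) (use Tt in \<open>auto intro!: continuous_intros cw\<close>)
          fix x assume x: "t < x" "x < t + \<delta>" "x \<notin> S"
          have xT: "x \<ge> T" using x t by auto
          obtain W where W: "((\<lambda>s. w s $ i) has_real_derivative W) (at x)"
            "Mv$i * W = - Ev$i * w x$i - (transpose D *v f x)$i + ps$i + b x$i + a x$i"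
            using der_w[of x i] x Tt by auto
          have "\<bar>(transpose D *v f x)$i - (transpose D *v f t)$i\<bar> \<le> K * (x - t)"
            using K(2)[of t x] Tt x by auto
          also have "\<dots> \<le> K * \<delta>" using x K by (intro mult_left_mono) auto
          finally have gx: "\<bar>(transpose D *v f x)$i - (transpose D *v f t)$i\<bar> \<le> \<epsilon> / 2" using \<delta> by simp
          have s1: "\<sigma> * ((transpose D *v f x)$i - ps$i) \<ge> \<epsilon> / 2"
          proof -
            have "\<sigma> * ((transpose D *v f x)$i - ps$i) = \<sigma> * ((transpose D *v f t)$i - ps$i)
                + \<sigma> * ((transpose D *v f x)$i - (transpose D *v f t)$i)" by (simp add: algebra_simps)
            moreover have "- (\<sigma> * ((transpose D *v f x)$i - (transpose D *v f t)$i)) \<le> \<epsilon> / 2"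
              using sz(2) gx order_trans by blast
            ultimately show ?thesis using \<sigma>g gt by linarith
          qed
          have bx: "b x$i = 0" using T[OF xT] by simp
          have hx: "\<bar>Ev$i * w x$i\<bar> < \<epsilon> / 8" "\<bar>a x$i\<bar> < \<epsilon> / 8" using T[OF xT] by auto
          have "Mv$i * (\<sigma> * W) = \<sigma> * (Mv$i * W)" by simp
          also have "\<dots> = \<sigma> * (- Ev$i * w x$i - (transpose D *v f x)$i + ps$i + b x$i + a x$i)"
            by (simp only: W(2))
          also have "\<dots> = \<sigma> * (- (Ev$i * w x$i)) - \<sigma> * ((transpose D *v f x)$i - ps$i) + \<sigma> * (a x$i)"
            using bx by (simp add: algebra_simps)
          also have "\<dots> \<le> \<epsilon> / 8 - \<epsilon> / 2 + \<epsilon> / 8"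
            using sz(1)[of "- (Ev$i * w x$i)"] sz(1)[of "a x$i"] hx s1 by simp
          finally have "Mv$i * (\<sigma> * W) \<le> - (\<epsilon> / 4)" by simp
          then have "\<sigma> * W \<le> - \<epsilon> / (4 * Mv$i)" using Mpos[of i] by (simp add: field_simps)
          moreover have "((\<lambda>s. \<sigma> * w s$i) has_real_derivative \<sigma> * W) (at x)"
            using W(1) by (rule DERIV_cmult)
          ultimately show "\<exists>d. ((\<lambda>s. \<sigma> * w s$i) has_real_derivative d) (at x) \<and> d \<le> - \<epsilon> / (4 * Mv$i)"
            by blast
        qed (use \<delta> in auto)
        then have 1: "\<sigma> * w (t + \<delta>)$i - \<sigma> * w t$i \<le> - (\<epsilon> * \<delta> / (4 * Mv$i))" by simp
        have 2: "\<bar>w (t + \<delta>)$i\<bar> < \<eta>" "\<bar>w t$i\<bar> < \<eta>" using T[of "t + \<delta>"] T[of t] t \<delta> by auto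
        have "- (\<sigma> * w (t + \<delta>)$i) < \<eta>" "\<sigma> * w t$i < \<eta>"
          using sz(2)[of "w (t + \<delta>)$i"] sz(1)[of "w t$i"] 2 by linarith+
        moreover have "2 * \<eta> = \<epsilon> * \<delta> / (4 * Mv$i)" unfolding \<eta>_def by simp
        ultimately show False using 1 by linarith
      qed
    qed
  qed
  then show ?thesis by (simp add: LIM_zero_iff)
qed

lemma yne: "y$e \<noteq> 0" using ypos[of e] by simp

lemma Q_tail:
  assumes "transpose D *v \<delta> = 0" "t \<ge> t0"
  shows "(\<Sum>e\<in>UNIV. f t$e * \<delta>$e / y$e) = (\<Sum>e\<in>UNIV. f t0$e * \<delta>$e / y$e)"
proof (rule Q_const[where S=S and u=w and D=D])
  show "transpose D *v \<delta> = 0" by (rule assms(1))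
  show "\<And>e. y $ e \<noteq> 0" by (rule yne)
qed (auto intro: Slf cf der_f assms(2))

lemma seq_bounded:
  assumes "\<And>n. \<tau> n \<ge> t0"
  shows "bounded (range (\<lambda>n. f (\<tau> n)))"
proof -
  obtain B where B: "\<forall>e. \<forall>t\<in>{t0..}. \<bar>f t$e\<bar> \<le> B" using f_bnd by blast
  have "norm (f (\<tau> n)) \<le> (\<Sum>e\<in>(UNIV::'e set). B)" for n
    using norm_le_l1_cart[of "f (\<tau> n)"] sum_mono[of UNIV "\<lambda>e. \<bar>f (\<tau> n)$e\<bar>" "\<lambda>e. B"] B assms[of n]
    by auto
  then show ?thesis unfolding bounded_iff by blast
qed

lemma seq_limit_eq:
  assumes "\<And>n. \<tau> n \<ge> t0" "filterlim \<tau> at_top sequentially" "(\<lambda>n. f (\<tau> n)) \<longlonglongrightarrow> L"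
  shows "transpose D *v L = ps"
proof (rule vec_eq_iff[THEN iffD2], rule allI)
  fix i
  have "(\<lambda>n. (transpose D *v f (\<tau> n))$i) \<longlonglongrightarrow> ps$i"
    using filterlim_compose[OF g_lim assms(2)] by simp
  moreover have "(\<lambda>n. (transpose D *v f (\<tau> n))$i) \<longlonglongrightarrow> (transpose D *v L)$i"
    unfolding tmv by (intro tendsto_intros assms(3))
  ultimately show "(transpose D *v L)$i = ps$i" using LIMSEQ_unique by blast
qed

lemma cluster_unique:
  assumes "\<And>n. \<tau>1 n \<ge> t0" "filterlim \<tau>1 at_top sequentially" "(\<lambda>n. f (\<tau>1 n)) \<longlonglongrightarrow> L1"
    and "\<And>n. \<tau>2 n \<ge> t0" "filterlim \<tau>2 at_top sequentially" "(\<lambda>n. f (\<tau>2 n)) \<longlonglongrightarrow> L2"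
  shows "L1 = L2"
proof -
  define \<delta> where "\<delta> = L1 - L2"
  have d0: "transpose D *v \<delta> = 0"
    unfolding \<delta>_def matrix_vector_mult_diff_distrib
    using seq_limit_eq[OF assms(1-3)] seq_limit_eq[OF assms(4-6)] by simp
  define Q0 where "Q0 = (\<Sum>e\<in>UNIV. f t0$e * \<delta>$e / y$e)"
  have lim: "(\<Sum>e\<in>UNIV. L$e * \<delta>$e / y$e) = Q0"
    if "\<And>n. \<tau> n \<ge> t0" "(\<lambda>n. f (\<tau> n)) \<longlonglongrightarrow> L" for \<tau> L
  proof -
    have "(\<lambda>n. \<Sum>e\<in>UNIV. f (\<tau> n)$e * \<delta>$e / y$e) \<longlonglongrightarrow> (\<Sum>e\<in>UNIV. L$e * \<delta>$e / y$e)"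
      by (intro tendsto_intros that(2) yne)
    moreover have "(\<lambda>n. \<Sum>e\<in>UNIV. f (\<tau> n)$e * \<delta>$e / y$e) = (\<lambda>n. Q0)"
      unfolding Q0_def using Q_tail[OF d0 that(1)] by auto
    ultimately show ?thesis using LIMSEQ_unique tendsto_const by metis
  qed
  have "(\<Sum>e\<in>UNIV. \<delta>$e * \<delta>$e / y$e) = (\<Sum>e\<in>UNIV. L1$e * \<delta>$e / y$e) - (\<Sum>e\<in>UNIV. L2$e * \<delta>$e / y$e)"
  proof -
    have "\<delta>$e * \<delta>$e / y$e = L1$e * \<delta>$e / y$e - L2$e * \<delta>$e / y$e" for e
      unfolding \<delta>_def by (simp add: diff_divide_distrib[symmetric] left_diff_distrib[symmetric])
    then show ?thesis by (simp add: sum_subtractf[symmetric])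
  qed
  also have "\<dots> = 0" using lim[OF assms(1,3)] lim[OF assms(4,6)] by simp
  finally have "(\<Sum>e\<in>UNIV. \<delta>$e * \<delta>$e / y$e) = 0" .
  moreover have "0 \<le> \<delta>$e * \<delta>$e / y$e" for e using ypos[of e] by simp
  ultimately have "\<forall>e\<in>UNIV. \<delta>$e * \<delta>$e / y$e = 0"
    by (subst sum_nonneg_eq_0_iff[symmetric]) auto
  then have "\<delta> = 0" using ypos by (auto simp: vec_eq_iff less_le)
  then show ?thesis unfolding \<delta>_def by simp
qed

lemma f_lim: "\<exists>L. (f \<longlongrightarrow> L) at_top \<and> transpose D *v L = ps"
proof -
  define \<tau>0 where "\<tau>0 = (\<lambda>n::nat. t0 + real n)"
  obtain L0 r where r: "strict_mono r" "((\<lambda>n. f (\<tau>0 n)) \<circ> r) \<longlonglongrightarrow> L0"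
    using bounded_imp_convergent_subsequence[OF seq_bounded[of \<tau>0]] unfolding \<tau>0_def by auto
  have t0r: "\<tau>0 (r n) \<ge> t0" for n unfolding \<tau>0_def by simp
  have t0r': "\<tau>0 (r n) \<ge> t0 + real n" for n unfolding \<tau>0_def using seq_suble[OF r(1), of n] by simp
  have fr: "(\<lambda>n. f (\<tau>0 (r n))) \<longlonglongrightarrow> L0" using r(2) by (simp add: o_def)
  have L0: "transpose D *v L0 = ps" by (rule seq_limit_eq[OF t0r filterlim_lin[OF t0r'] fr])
  have "(f \<longlongrightarrow> L0) at_top"
  proof (rule ccontr)
    assume "\<not> (f \<longlongrightarrow> L0) at_top"
    then obtain \<epsilon> where \<epsilon>: "\<epsilon> > 0" "\<not> eventually (\<lambda>t. dist (f t) L0 < \<epsilon>) at_top"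
      unfolding tendsto_iff by blast
    then have "\<forall>T. \<exists>t\<ge>T. dist (f t) L0 \<ge> \<epsilon>"
      unfolding eventually_at_top_linorder by (meson not_le)
    then have "\<forall>n. \<exists>t. t \<ge> t0 + real n \<and> dist (f t) L0 \<ge> \<epsilon>" by blast
    then obtain \<tau>1 where \<tau>1: "\<And>n. \<tau>1 n \<ge> t0 + real n" "\<And>n. dist (f (\<tau>1 n)) L0 \<ge> \<epsilon>" by metis
    have \<tau>1t: "\<tau>1 n \<ge> t0" for n using \<tau>1(1)[of n] by simp
    obtain L1 r1 where r1: "strict_mono r1" "((\<lambda>n. f (\<tau>1 n)) \<circ> r1) \<longlonglongrightarrow> L1"
      using bounded_imp_convergent_subsequence[OF seq_bounded[of \<tau>1, OF \<tau>1t]] by auto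
    have a1: "\<tau>1 (r1 n) \<ge> t0" for n using \<tau>1t .
    have a1': "\<tau>1 (r1 n) \<ge> t0 + real n" for n using \<tau>1(1)[of "r1 n"] seq_suble[OF r1(1), of n] by simp
    have fr1: "(\<lambda>n. f (\<tau>1 (r1 n))) \<longlonglongrightarrow> L1" using r1(2) by (simp add: o_def)
    have "L1 = L0" by (rule cluster_unique[OF a1 filterlim_lin[OF a1'] fr1 t0r filterlim_lin[OF t0r'] fr])
    moreover have "dist L1 L0 \<ge> \<epsilon>"
    proof (rule tendsto_lowerbound)
      show "(\<lambda>n. dist (f (\<tau>1 (r1 n))) L0) \<longlonglongrightarrow> dist L1 L0" by (intro tendsto_intros fr1)
    qed (use \<tau>1(2) in auto)
    ultimately show False using \<epsilon> by simp
  qed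
  with L0 show ?thesis by blast
qed

end



lemma deriv_within_at:
  assumes "t > 0" "(g has_real_derivative d) (at t within {0..})"
  shows "(g has_real_derivative d) (at t)"
proof -
  have "at t within {0..} = at t" using assms(1) by (intro at_within_interior) auto
  with assms(2) show ?thesis by simp
qed

lemma lf_union: "locally_finite_set A \<Longrightarrow> locally_finite_set B \<Longrightarrow> locally_finite_set (A \<union> B)"
  unfolding locally_finite_set_def by (auto simp: Int_Un_distrib2)

lemma stay_below:
  fixes g :: "real \<Rightarrow> real"
  assumes S: "locally_finite_set S" and c: "continuous_on {0..} g" and g0: "g 0 \<le> h"
    and d: "\<And>x. x > 0 \<Longrightarrow> x \<notin> S \<Longrightarrow> g x > h \<Longrightarrow> \<exists>d. (g has_real_derivative d) (at x) \<and> d \<le> 0"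
    and t: "t \<ge> 0"
  shows "g t \<le> h"
proof (rule ccontr)
  assume gt: "\<not> g t \<le> h"
  define A where "A = {0..t} \<inter> g -` {..h}"
  have cA: "closed A" unfolding A_def
    by (rule continuous_closed_preimage) (auto intro: continuous_on_subset[OF c])
  have A0: "0 \<in> A" using g0 t unfolding A_def by auto
  have bA: "bdd_above A" unfolding A_def by (rule bdd_aboveI[of _ t]) auto
  define s where "s = Sup A"
  have sA: "s \<in> A" unfolding s_def using closed_contains_Sup[OF _ bA cA] A0 by blast
  then have s: "0 \<le> s" "s \<le> t" "g s \<le> h" unfolding A_def by auto
  have gx: "g x > h" if "s < x" "x \<le> t" for x
  proof (rule ccontr)
    assume "\<not> g x > h"
    then have "x \<in> A" using that s unfolding A_def by auto
    then have "x \<le> s" unfolding s_def using bA by (rule cSup_upper)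
    with that show False by simp
  qed
  have "g t - g s \<le> 0 * (t - s)"
  proof (rule mvt_lf[OF S s(2)])
    show "continuous_on {s..t} g" by (rule continuous_on_subset[OF c]) (use s in auto)
    fix x assume x: "s < x" "x < t" "x \<notin> S"
    show "\<exists>d. (g has_real_derivative d) (at x) \<and> d \<le> 0"
      by (rule d) (use x s gx in auto)
  qed
  with s gt show False by simp
qed

lemma adf_sign:
  assumes "wlt < 0" "0 < wht"
  shows "w * alpha_df_comp wl wh wlt wht gl gh w v \<le> 0"
  using assms unfolding alpha_df_comp_def
  by (auto simp: mult_nonneg_nonpos mult_nonpos_nonneg)

lemma adf_zero:
  assumes "wlt \<le> w" "w \<le> wht"
  shows "alpha_df_comp wl wh wlt wht gl gh w v = 0"
  using assms unfolding alpha_df_comp_def by auto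

lemma adf_bound:
  assumes "wl < wlt" "wht < wh" "gl > 0" "gh > 0"
  shows "\<bar>alpha_df_comp wl wh wlt wht gl gh w v\<bar> \<le> gh + gl + \<bar>v\<bar>"
proof (cases "w > wht")
  case True
  have "(wh - w) / (w - wht) \<ge> -1" using True assms by (simp add: le_divide_eq)
  then have "gh * ((wh - w) / (w - wht)) \<ge> gh * (-1)" using assms by (intro mult_left_mono) auto
  then have "gh * (wh - w) / (w - wht) \<ge> - gh" by simp
  then show ?thesis using True assms unfolding alpha_df_comp_def by auto
next
  case False
  show ?thesis
  proof (cases "wlt \<le> w")
    case True
    then show ?thesis using False assms unfolding alpha_df_comp_def by auto
  next
    case F2: False
    have "(wl - w) / (wlt - w) \<le> 1" using F2 assms by (simp add: divide_le_eq)
    then have "gl * ((wl - w) / (wlt - w)) \<le> gl * 1" using assms by (intro mult_left_mono) auto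
    then have "gl * (wl - w) / (wlt - w) \<le> gl" by simp
    then show ?thesis using False F2 assms unfolding alpha_df_comp_def by auto
  qed
qed

lemma adf_upper:
  assumes "w > wh" "wht < wh" "gh > 0"
  shows "alpha_df_comp wl wh wlt wht gl gh w v - v < 0"
proof -
  have "gh * (wh - w) / (w - wht) < 0" using assms by (auto intro!: divide_neg_pos mult_pos_neg)
  then show ?thesis using assms unfolding alpha_df_comp_def by auto
qed

lemma adf_lower:
  assumes "w < wl" "wl < wlt" "gl > 0" "wlt < 0" "0 < wht"
  shows "alpha_df_comp wl wh wlt wht gl gh w v - v > 0"
proof -
  have "gl * (wl - w) / (wlt - w) > 0" using assms by (auto intro!: divide_pos_pos)
  then show ?thesis using assms unfolding alpha_df_comp_def by (simp add: less_max_iff_disj)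
qed

lemma sat_bound: "e > 0 \<Longrightarrow> \<bar>sat e a u\<bar> \<le> e * \<bar>a\<bar>"
  unfolding sat_def by (cases "u \<le> e * \<bar>a\<bar>"; cases "u \<ge> - (e * \<bar>a\<bar>)") (auto simp: max_def min_def)

lemma interval_idx:
  fixes \<Delta> :: "nat \<Rightarrow> real"
  assumes "\<Delta> 0 = 0" "strict_mono \<Delta>" "filterlim \<Delta> at_top sequentially" "t \<ge> 0"
  shows "\<exists>j. \<Delta> j \<le> t \<and> t < \<Delta> (Suc j)"
proof -
  have "eventually (\<lambda>n. t + 1 \<le> \<Delta> n) sequentially"
    using assms(3) unfolding filterlim_at_top by blast
  then obtain n where n: "t < \<Delta> n" unfolding eventually_sequentially
    by (metis le_refl less_add_one order_less_le_trans)
  define m where "m = (LEAST n. t < \<Delta> n)"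
  have m: "t < \<Delta> m" unfolding m_def using n by (rule LeastI)
  have m0: "m \<noteq> 0"
  proof
    assume "m = 0" then show False using m assms(1,4) by simp
  qed
  then obtain j where j: "m = Suc j" by (cases m) auto
  have "\<not> t < \<Delta> j" using j unfolding m_def by (metis lessI not_less_Least)
  then show ?thesis using m j by (intro exI[of _ j]) auto
qed

definition ind :: "'e \<Rightarrow> real^'e::finite" where "ind e0 = (\<chi> e. if e = e0 then 1 else 0)"

definition unitv :: "'i \<Rightarrow> real^'i::finite" where "unitv i = (\<chi> k. if k = i then 1 else 0)"

lemma DT_ind:
  assumes "src e0 \<noteq> snk e0"
  shows "transpose (incidence_matrix src snk) *v ind e0 = unitv (src e0) - unitv (snk e0)"
proof -
  have h1: "(\<Sum>e\<in>UNIV. incidence_matrix src snk $ e $ k * ind e0 $ e) = incidence_matrix src snk $ e0 $ k" for k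
    unfolding ind_def by (simp add: if_distrib cong: if_cong)
  have "(transpose (incidence_matrix src snk) *v ind e0) $ k = (unitv (src e0) - unitv (snk e0)) $ k" for k
  proof -
    have "(transpose (incidence_matrix src snk) *v ind e0) $ k = incidence_matrix src snk $ e0 $ k"
      by (simp only: tmv) (rule h1)
    also have "\<dots> = (unitv (src e0) - unitv (snk e0)) $ k"
      using assms by (auto simp: unitv_def incidence_matrix_def)
    finally show ?thesis .
  qed
  then show ?thesis by (intro iffD2[OF vec_eq_iff] allI)
qed

lemma conn_flow:
  fixes src snk :: "'e::finite \<Rightarrow> 'i::finite"
  assumes "simple_graph src snk" "connected_graph src snk"
  shows "\<exists>g. transpose (incidence_matrix src snk) *v g = unitv i - unitv j"
proof -
  let ?R = "{(src e, snk e) | e. True} \<union> {(snk e, src e) | e. True}"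
  let ?D = "transpose (incidence_matrix src snk)"
  have ne: "src e \<noteq> snk e" for e using assms(1) unfolding simple_graph_def by auto
  have "(i, j) \<in> ?R\<^sup>*" using assms(2) unfolding connected_graph_def by blast
  then show ?thesis
  proof (induction rule: rtrancl_induct)
    case base
    then show ?case by (intro exI[of _ 0]) simp
  next
    case (step k j)
    then obtain g where g: "?D *v g = unitv i - unitv k" by blast
    from step(2) show ?case
    proof
      assume "(k, j) \<in> {(src e, snk e) | e. True}"
      then obtain e where e: "k = src e" "j = snk e" by blast
      have "?D *v (g + ind e) = unitv i - unitv j"
        using g DT_ind[of src e snk, OF ne[of e]] e by (simp add: matrix_vector_right_distrib)
      then show ?thesis by blast
    next
      assume "(k, j) \<in> {(snk e, src e) | e. True}"
      then obtain e where e: "k = snk e" "j = src e" by blast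
      have "?D *v (g - ind e) = unitv i - unitv j"
        using g DT_ind[of src e snk, OF ne[of e]] e by (simp add: matrix_vector_mult_diff_distrib)
      then show ?thesis by blast
    qed
  qed
qed

lemma exists_fh:
  fixes src snk :: "'e::finite \<Rightarrow> 'i::finite" and ps :: "real^'i"
  assumes "simple_graph src snk" "connected_graph src snk" "(\<Sum>i\<in>UNIV. ps $ i) = 0"
  shows "\<exists>fh. transpose (incidence_matrix src snk) *v fh = ps"
proof -
  let ?D = "transpose (incidence_matrix src snk)"
  obtain r :: 'i where True by blast
  have "\<forall>j. \<exists>g. ?D *v g = unitv j - unitv r" using conn_flow[OF assms(1,2)] by blast
  then obtain G where G: "\<And>j. ?D *v G j = unitv j - unitv r" by metis
  define fh where "fh = (\<Sum>j\<in>UNIV. ps$j *\<^sub>R G j)"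
  have "?D *v fh = (\<Sum>j\<in>UNIV. ps$j *\<^sub>R (?D *v G j))"
    unfolding fh_def by (simp add: linear_sum[OF matrix_vector_mul_linear] linear_cmul[OF matrix_vector_mul_linear] o_def)
  also have "\<dots> = (\<Sum>j\<in>UNIV. ps$j *\<^sub>R (unitv j - unitv r))" using G by simp
  also have "\<dots> = ps"
  proof -
    have "(\<Sum>j\<in>UNIV. ps$j *\<^sub>R (unitv j - unitv r)) $ k = ps $ k" for k
    proof -
      have "(\<Sum>j\<in>UNIV. ps$j *\<^sub>R (unitv j - unitv r)) $ k = (\<Sum>j\<in>UNIV. ps$j * ((if k = j then 1 else 0) - (if k = r then 1 else 0)))"
        by (simp add: sum_component unitv_def)
      also have "\<dots> = (\<Sum>j\<in>UNIV. (if k = j then ps$j else 0) - (if k = r then ps$j else 0))"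
        by (intro sum.cong) auto
      also have "\<dots> = ps$k" using assms(3) by (cases "k = r") (simp_all add: sum_subtractf)
      finally show ?thesis .
    qed
    then show ?thesis by (simp add: vec_eq_iff)
  qed
  finally show ?thesis by blast
qed




theorem theorem4p3:
  fixes src snk :: "'e::finite \<Rightarrow> 'i::finite"
    and D :: "real^'i^'e" and y :: "real^'e" and Mv Ev :: "real^'i"
    and Iu Iw :: "'i set"
    and T tt d :: real and N :: nat
    and c eps Tc wlo whi wlt wht gl gh :: "'i \<Rightarrow> real"
    and \<Delta> :: "nat \<Rightarrow> real" and pf :: "nat \<Rightarrow> real \<Rightarrow> real^'i"
    and p :: "real \<Rightarrow> real^'i" and pstar :: "real^'i" and tbar :: real
    and f :: "real \<Rightarrow> real^'e" and w aM :: "real \<Rightarrow> real^'i"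
  assumes graph: "simple_graph src snk" "connected_graph src snk"
    and D_def: "D = incidence_matrix src snk"
    and pos: "\<forall>e. y $ e > 0" "\<forall>i. Mv $ i > 0" "\<forall>i. Ev $ i > 0"
    and sets: "Iw \<subseteq> Iu"
    and mpc_par: "T > 0" "tt > 0" "N = nat \<lceil>tt / T\<rceil>" "d > 0"
      "\<forall>i\<in>Iu. c i > 0 \<and> eps i > 0 \<and> Tc i > 0"
      "\<forall>i\<in>Iw. wlo i < whi i"
    and sampling: "\<Delta> 0 = 0" "strict_mono \<Delta>" "filterlim \<Delta> at_top sequentially"
    and forecasts: "\<forall>j i. piecewise_continuous_on {\<Delta> j .. \<Delta> j + tt} (\<lambda>t. pf j t $ i)"
    and top_par: "\<forall>i\<in>Iw. gh i > 0 \<and> gl i > 0 \<and> wlo i < wlt i \<and> wlt i < 0 \<and> 0 < wht i \<and> wht i < whi i"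
    and p_pc: "\<forall>i. piecewise_continuous_on {0..} (\<lambda>t. p t $ i)"
    and p_const: "0 \<le> tbar" "\<forall>t\<ge>tbar. p t = pstar" "(\<Sum>i\<in>UNIV. pstar $ i) = 0"
    and eps_T: "\<forall>i\<in>Iu. eps i * Tc i < 1"
    and sol: "closed_loop_sol y D Mv Ev p Iu Iw T N c eps Tc d wlo whi \<Delta> pf wlt wht gl gh f w aM"
  shows
    "(\<forall>i\<in>Iw. w 0 $ i \<in> {wlo i .. whi i} \<longrightarrow> (\<forall>t\<ge>0. w t $ i \<in> {wlo i .. whi i}))
     \<and> (\<forall>i\<in>Iw. w 0 $ i \<notin> {wlo i .. whi i} \<longrightarrow> (\<exists>t0. \<forall>t\<ge>t0. w t $ i \<in> {wlo i .. whi i}))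
     \<and> (\<exists>finf. (f \<longlongrightarrow> finf) at_top \<and> (w \<longlongrightarrow> 0) at_top \<and>
          (\<forall>fo wo. open_loop_sol y D Mv Ev p fo wo \<and> fo 0 = f 0 \<and> wo 0 = w 0 \<longrightarrow>
              (fo \<longlongrightarrow> finf) at_top \<and> (wo \<longlongrightarrow> 0) at_top))
     \<and> ((\<lambda>t. alpha_df D Ev Iw wlo whi wlt wht gl gh (f t) (w t) (p t) (aM t) + aM t) \<longlongrightarrow> 0) at_top
     \<and> (aM \<longlongrightarrow> 0) at_top
     \<and> ((\<lambda>t. alpha_df D Ev Iw wlo whi wlt wht gl gh (f t) (w t) (p t) (aM t)) \<longlongrightarrow> 0) at_top"
proof -
  define aDF where "aDF = (\<lambda>t. alpha_df D Ev Iw wlo whi wlt wht gl gh (f t) (w t) (p t) (aM t))"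
  have ypos: "\<And>e. y$e > 0" and Mpos: "\<And>i. Mv$i > 0" and Epos: "\<And>i. Ev$i > 0" using pos by auto
  have adf_nth: "aDF t $ i = (if i \<in> Iw then alpha_df_comp (wlo i) (whi i) (wlt i) (wht i) (gl i) (gh i) (w t $ i)
      (Ev$i * w t$i + (transpose D *v f t)$i - p t$i - aM t$i) else 0)" for t i
    unfolding aDF_def alpha_df_def by simp
  obtain fh where fh: "transpose D *v fh = pstar"
    using exists_fh[OF graph p_const(3)] D_def by blast
  from sol obtain S where
      cf: "continuous_on {0..} f" and cw: "continuous_on {0..} w" and ca: "continuous_on {0..} aM"
      and a0: "\<And>t i. t \<ge> 0 \<Longrightarrow> i \<notin> Iu \<Longrightarrow> aM t $ i = 0"
      and Slf: "locally_finite_set S"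
      and dS: "\<And>t j. t \<ge> 0 \<Longrightarrow> t \<notin> S \<Longrightarrow> \<Delta> j \<le> t \<Longrightarrow> t < \<Delta> (Suc j) \<Longrightarrow>
           (let uM = mpc_u T N y D Mv Ev Iu Iw Tc eps wlo whi c d
                        (\<lambda>k. pf j (\<Delta> j + real k * T)) (f (\<Delta> j)) (w (\<Delta> j)) (aM (\<Delta> j));
                aDF = alpha_df D Ev Iw wlo whi wlt wht gl gh (f t) (w t) (p t) (aM t)
            in
           (\<forall>e. ((\<lambda>s. f s $ e) has_real_derivative (y $ e * (D *v w t) $ e)) (at t within {0..})) \<and>
           (\<forall>i. \<exists>w'. ((\<lambda>s. w s $ i) has_real_derivative w') (at t within {0..}) \<and>
                 Mv $ i * w' = - Ev $ i * w t $ i - (transpose D *v f t) $ i + p t $ i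
                               + (aDF $ i + aM t $ i)) \<and>
           (\<forall>i\<in>Iu. ((\<lambda>s. aM s $ i) has_real_derivative
                 (- aM t $ i / Tc i - w t $ i + sat (eps i) (aM t $ i) (uM $ i))) (at t within {0..})))"
    unfolding closed_loop_sol_def by blast
  have CL: "(\<forall>e. ((\<lambda>s. f s $ e) has_real_derivative (y $ e * (D *v w t) $ e)) (at t)) \<and>
           (\<forall>i. \<exists>w'. ((\<lambda>s. w s $ i) has_real_derivative w') (at t) \<and>
                 Mv $ i * w' = - Ev $ i * w t $ i - (transpose D *v f t) $ i + p t $ i
                               + (aDF t $ i + aM t $ i)) \<and>
           (\<forall>i\<in>Iu. \<exists>s. \<bar>s\<bar> \<le> eps i * \<bar>aM t $ i\<bar> \<and> ((\<lambda>s. aM s $ i) has_real_derivative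
                 (- aM t $ i / Tc i - w t $ i + s)) (at t))"
    if t: "t > 0" "t \<notin> S" for t
  proof -
    obtain j where j: "\<Delta> j \<le> t" "t < \<Delta> (Suc j)" using interval_idx[OF sampling, of t] t by auto
    define uM where "uM = mpc_u T N y D Mv Ev Iu Iw Tc eps wlo whi c d
                        (\<lambda>k. pf j (\<Delta> j + real k * T)) (f (\<Delta> j)) (w (\<Delta> j)) (aM (\<Delta> j))"
    have H: "(\<forall>e. ((\<lambda>s. f s $ e) has_real_derivative (y $ e * (D *v w t) $ e)) (at t within {0..})) \<and>
           (\<forall>i. \<exists>w'. ((\<lambda>s. w s $ i) has_real_derivative w') (at t within {0..}) \<and>
                 Mv $ i * w' = - Ev $ i * w t $ i - (transpose D *v f t) $ i + p t $ i
                               + (aDF t $ i + aM t $ i)) \<and>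
           (\<forall>i\<in>Iu. ((\<lambda>s. aM s $ i) has_real_derivative
                 (- aM t $ i / Tc i - w t $ i + sat (eps i) (aM t $ i) (uM $ i))) (at t within {0..}))"
      using dS[of t j] t j unfolding uM_def aDF_def Let_def by auto
    show ?thesis
    proof (intro conjI allI ballI)
      fix e show "((\<lambda>s. f s $ e) has_real_derivative (y $ e * (D *v w t) $ e)) (at t)"
        using H deriv_within_at[OF t(1)] by blast
    next
      fix i
      obtain w' where "((\<lambda>s. w s $ i) has_real_derivative w') (at t within {0..})"
          "Mv $ i * w' = - Ev $ i * w t $ i - (transpose D *v f t) $ i + p t $ i + (aDF t $ i + aM t $ i)"
        using H by blast
      then show "\<exists>w'. ((\<lambda>s. w s $ i) has_real_derivative w') (at t) \<and>
                 Mv $ i * w' = - Ev $ i * w t $ i - (transpose D *v f t) $ i + p t $ i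
                               + (aDF t $ i + aM t $ i)"
        using deriv_within_at[OF t(1)] by blast
    next
      fix i assume i: "i \<in> Iu"
      have "eps i > 0" using mpc_par(5) i by auto
      then have "\<bar>sat (eps i) (aM t $ i) (uM $ i)\<bar> \<le> eps i * \<bar>aM t $ i\<bar>" by (rule sat_bound)
      moreover have "((\<lambda>s. aM s $ i) has_real_derivative
                 (- aM t $ i / Tc i - w t $ i + sat (eps i) (aM t $ i) (uM $ i))) (at t)"
        using H i deriv_within_at[OF t(1)] by blast
      ultimately show "\<exists>s. \<bar>s\<bar> \<le> eps i * \<bar>aM t $ i\<bar> \<and> ((\<lambda>s. aM s $ i) has_real_derivative
                 (- aM t $ i / Tc i - w t $ i + s)) (at t)" by blast
    qed
  qed
  have tb: "0 \<le> tbar" by (rule p_const(1))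
  have pst: "\<And>t. t \<ge> tbar \<Longrightarrow> p t = pstar" using p_const(2) by auto
  define G where "G = (\<Sum>i\<in>UNIV. \<bar>gh i\<bar> + \<bar>gl i\<bar>)"
  define rho where "rho = Min (insert 1 ((\<lambda>i. min (wht i) (- wlt i)) ` Iw))"
  have rho: "rho > 0" unfolding rho_def using top_par by (subst Min_gr_iff) auto
  have rho_le: "rho \<le> wht i" "rho \<le> - wlt i" if "i \<in> Iw" for i
  proof -
    have "rho \<le> min (wht i) (- wlt i)" unfolding rho_def by (rule Min_le) (use that in auto)
    then show "rho \<le> wht i" "rho \<le> - wlt i" by auto
  qed
  have G: "\<bar>gh i\<bar> + \<bar>gl i\<bar> \<le> G" for i
    unfolding G_def by (rule member_le_sum) auto
  interpret cl: traj D y Mv Ev pstar Iu Tc eps fh tbar S G rho f w aM aDF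
  proof
    show "\<And>e. y$e > 0" "\<And>i. Mv$i > 0" "\<And>i. Ev$i > 0" by (fact ypos Mpos Epos)+
    show "\<And>i. i \<in> Iu \<Longrightarrow> Tc i > 0" "\<And>i. i \<in> Iu \<Longrightarrow> eps i \<ge> 0" using mpc_par(5) by auto
    show "\<And>i. i \<in> Iu \<Longrightarrow> eps i * Tc i < 1" using eps_T by auto
    show "transpose D *v fh = pstar" by (fact fh)
    show "continuous_on {tbar..} f" "continuous_on {tbar..} w" "continuous_on {tbar..} aM"
      using cf cw ca tb by (auto intro: continuous_on_subset)
    show "\<And>t i. t \<ge> tbar \<Longrightarrow> i \<notin> Iu \<Longrightarrow> aM t $ i = 0" using a0 tb by auto
    show "locally_finite_set S" by (fact Slf)
    show "\<And>t e. t > tbar \<Longrightarrow> t \<notin> S \<Longrightarrow> ((\<lambda>s. f s $ e) has_real_derivative (y$e * (D *v w t)$e)) (at t)"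
      using CL tb by auto
    show "\<exists>w'. ((\<lambda>s. w s $ i) has_real_derivative w') (at t) \<and>
        Mv$i * w' = - Ev$i * w t$i - (transpose D *v f t)$i + pstar$i + aDF t$i + aM t$i"
      if tt: "t > tbar" "t \<notin> S" for t i
    proof -
      obtain w' where "((\<lambda>s. w s $ i) has_real_derivative w') (at t)"
          "Mv $ i * w' = - Ev $ i * w t $ i - (transpose D *v f t) $ i + p t $ i + (aDF t $ i + aM t $ i)"
        using CL[of t] tt tb by (meson le_less_trans)
      moreover have "p t = pstar" using pst tt by auto
      ultimately show ?thesis by (intro exI[of _ w']) auto
    qed
    show "\<And>t i. t > tbar \<Longrightarrow> t \<notin> S \<Longrightarrow> i \<in> Iu \<Longrightarrow> \<exists>s. \<bar>s\<bar> \<le> eps i * \<bar>aM t$i\<bar> \<and>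
        ((\<lambda>s. aM s $ i) has_real_derivative (- aM t$i / Tc i - w t$i + s)) (at t)"
      using CL tb by auto
    show "w t$i * aDF t$i \<le> 0" if "t \<ge> tbar" for t i
      unfolding adf_nth using top_par by (auto intro!: adf_sign)
    show "\<bar>aDF t$i\<bar> \<le> G + \<bar>Ev$i * w t$i + (transpose D *v f t)$i - pstar$i - aM t$i\<bar>" if "t \<ge> tbar" for t i
    proof (cases "i \<in> Iw")
      case True
      have "\<bar>aDF t$i\<bar> \<le> gh i + gl i + \<bar>Ev$i * w t$i + (transpose D *v f t)$i - p t$i - aM t$i\<bar>"
        unfolding adf_nth using True top_par mpc_par(6) by (auto intro!: adf_bound)
      moreover have "gh i + gl i \<le> G" using G[of i] by linarith
      ultimately show ?thesis using pst[OF that] by simp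
    next
      case False
      then show ?thesis unfolding adf_nth using G[of i] by (auto intro: order_trans[OF add_nonneg_nonneg])
    qed
    show "rho > 0" by (fact rho)
    show "aDF t$i = 0" if "t \<ge> tbar" "\<bar>w t$i\<bar> \<le> rho" for t i
    proof (cases "i \<in> Iw")
      case True
      then show ?thesis unfolding adf_nth using rho_le[OF True] that by (auto intro!: adf_zero)
    qed (simp add: adf_nth)
  qed
  have inv: "\<forall>t\<ge>0. w t $ i \<in> {wlo i .. whi i}" if i: "i \<in> Iw" "w 0 $ i \<in> {wlo i .. whi i}" for i
  proof (intro allI impI)
    fix t :: real assume t: "t \<ge> 0"
    have tp: "gh i > 0" "gl i > 0" "wlo i < wlt i" "wlt i < 0" "0 < wht i" "wht i < whi i"
      using top_par i(1) by auto
    have up: "w t $ i \<le> whi i"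
    proof (rule stay_below[OF Slf _ _ _ t])
      show "continuous_on {0..} (\<lambda>s. w s $ i)" by (intro continuous_intros cw)
      show "w 0 $ i \<le> whi i" using i(2) by auto
      fix x assume x: "x > 0" "x \<notin> S" "w x $ i > whi i"
      obtain w' where w': "((\<lambda>s. w s $ i) has_real_derivative w') (at x)"
          "Mv $ i * w' = - Ev $ i * w x $ i - (transpose D *v f x) $ i + p x $ i + (aDF x $ i + aM x $ i)"
        using CL[OF x(1,2)] by blast
      have "alpha_df_comp (wlo i) (whi i) (wlt i) (wht i) (gl i) (gh i) (w x $ i)
          (Ev$i * w x$i + (transpose D *v f x)$i - p x$i - aM x$i) - (Ev$i * w x$i + (transpose D *v f x)$i - p x$i - aM x$i) < 0"
        using x(3) tp by (intro adf_upper) auto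
      then have "Mv $ i * w' < 0" using w'(2) i(1) unfolding adf_nth by simp
      then have "w' \<le> 0" using Mpos[of i] by (simp add: mult_less_0_iff)
      then show "\<exists>d. ((\<lambda>s. w s $ i) has_real_derivative d) (at x) \<and> d \<le> 0" using w'(1) by blast
    qed
    have lo: "- w t $ i \<le> - wlo i"
    proof (rule stay_below[OF Slf _ _ _ t])
      show "continuous_on {0..} (\<lambda>s. - w s $ i)" by (intro continuous_intros cw)
      show "- w 0 $ i \<le> - wlo i" using i(2) by auto
      fix x assume x: "x > 0" "x \<notin> S" "- w x $ i > - wlo i"
      obtain w' where w': "((\<lambda>s. w s $ i) has_real_derivative w') (at x)"
          "Mv $ i * w' = - Ev $ i * w x $ i - (transpose D *v f x) $ i + p x $ i + (aDF x $ i + aM x $ i)"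
        using CL[OF x(1,2)] by blast
      have "alpha_df_comp (wlo i) (whi i) (wlt i) (wht i) (gl i) (gh i) (w x $ i)
          (Ev$i * w x$i + (transpose D *v f x)$i - p x$i - aM x$i) - (Ev$i * w x$i + (transpose D *v f x)$i - p x$i - aM x$i) > 0"
        using x(3) tp by (intro adf_lower) auto
      then have "Mv $ i * w' > 0" using w'(2) i(1) unfolding adf_nth by simp
      then have "- w' \<le> 0" using Mpos[of i] by (simp add: zero_less_mult_iff)
      moreover have "((\<lambda>s. - w s $ i) has_real_derivative - w') (at x)" using w'(1) by (rule DERIV_minus)
      ultimately show "\<exists>d. ((\<lambda>s. - w s $ i) has_real_derivative d) (at x) \<and> d \<le> 0" by blast
    qed
    show "w t $ i \<in> {wlo i .. whi i}" using up lo by auto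
  qed
  have attr: "\<exists>t0. \<forall>t\<ge>t0. w t $ i \<in> {wlo i .. whi i}" if i: "i \<in> Iw" for i
  proof -
    obtain T where T: "\<And>t. t \<ge> T \<Longrightarrow> \<forall>i. \<bar>w t$i\<bar> < rho"
      using cl.w_small[OF rho] unfolding eventually_at_top_linorder by blast
    have tp: "wlo i < wlt i" "wht i < whi i" using top_par i by auto
    have "w t $ i \<in> {wlo i .. whi i}" if "t \<ge> T" for t
    proof -
      have "\<bar>w t$i\<bar> < rho" using T[OF that] by blast
      then show ?thesis using rho_le[OF i] tp by (simp add: abs_less_iff)
    qed
    then show ?thesis by blast
  qed
  obtain L where L: "(f \<longlongrightarrow> L) at_top" "transpose D *v L = pstar" using cl.f_lim by blast
  have ol: "(fo \<longlongrightarrow> L) at_top \<and> (wo \<longlongrightarrow> 0) at_top"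
    if olh: "open_loop_sol y D Mv Ev p fo wo" "fo 0 = f 0" "wo 0 = w 0" for fo wo
  proof -
    from olh(1) obtain So where
      cfo: "continuous_on {0..} fo" and cwo: "continuous_on {0..} wo"
      and Solf: "locally_finite_set So"
      and dSo: "\<And>t. t \<ge> 0 \<Longrightarrow> t \<notin> So \<Longrightarrow>
           (\<forall>e. ((\<lambda>s. fo s $ e) has_real_derivative (y $ e * (D *v wo t) $ e)) (at t within {0..})) \<and>
           (\<forall>i. \<exists>w'. ((\<lambda>s. wo s $ i) has_real_derivative w') (at t within {0..}) \<and>
                 Mv $ i * w' = - Ev $ i * wo t $ i - (transpose D *v fo t) $ i + p t $ i)"
      unfolding open_loop_sol_def by blast
    have dfo: "((\<lambda>s. fo s $ e) has_real_derivative (y $ e * (D *v wo t) $ e)) (at t)"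
      if "t > 0" "t \<notin> So" for t e
      using dSo[of t] that deriv_within_at[OF that(1)] by auto
    have dwo: "\<exists>w'. ((\<lambda>s. wo s $ i) has_real_derivative w') (at t) \<and>
                 Mv $ i * w' = - Ev $ i * wo t $ i - (transpose D *v fo t) $ i + p t $ i"
      if tt: "t > 0" "t \<notin> So" for t i
    proof -
      have "t \<ge> 0" using tt by simp
      then obtain w' where "((\<lambda>s. wo s $ i) has_real_derivative w') (at t within {0..})"
          "Mv $ i * w' = - Ev $ i * wo t $ i - (transpose D *v fo t) $ i + p t $ i"
        using dSo[of t] tt(2) by blast
      then show ?thesis using deriv_within_at[OF tt(1)] by blast
    qed
    interpret ol: traj D y Mv Ev pstar "{}" Tc eps fh tbar So 0 1 fo wo "\<lambda>t. 0" "\<lambda>t. 0"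
    proof
      show "\<And>e. y$e > 0" "\<And>i. Mv$i > 0" "\<And>i. Ev$i > 0" by (fact ypos Mpos Epos)+
      show "transpose D *v fh = pstar" by (fact fh)
      show "continuous_on {tbar..} fo" "continuous_on {tbar..} wo"
        using cfo cwo tb by (auto intro: continuous_on_subset)
      show "locally_finite_set So" by (fact Solf)
      show "\<And>t e. t > tbar \<Longrightarrow> t \<notin> So \<Longrightarrow> ((\<lambda>s. fo s $ e) has_real_derivative (y$e * (D *v wo t)$e)) (at t)"
        using dfo tb by auto
      show "\<exists>w'. ((\<lambda>s. wo s $ i) has_real_derivative w') (at t) \<and>
        Mv$i * w' = - Ev$i * wo t$i - (transpose D *v fo t)$i + pstar$i + (0::real^'i)$i + (0::real^'i)$i"
        if tt: "t > tbar" "t \<notin> So" for t i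
      proof -
        have "0 < t" using tt tb by linarith
        then obtain w' where "((\<lambda>s. wo s $ i) has_real_derivative w') (at t)"
            "Mv $ i * w' = - Ev $ i * wo t $ i - (transpose D *v fo t) $ i + p t $ i"
          using dwo tt by blast
        moreover have "p t = pstar" using pst tt by auto
        ultimately show ?thesis by (intro exI[of _ w']) auto
      qed
    qed auto
    obtain Lo where Lo: "(fo \<longlongrightarrow> Lo) at_top" "transpose D *v Lo = pstar" using ol.f_lim by blast
    define \<delta> where "\<delta> = L - Lo"
    have d0: "transpose D *v \<delta> = 0" unfolding \<delta>_def matrix_vector_mult_diff_distrib using L(2) Lo(2) by simp
    have Q0: "(\<Sum>e\<in>UNIV. (f t - fo t)$e * \<delta>$e / y$e) = 0" if "t \<ge> 0" for t
    proof -
      have "(\<Sum>e\<in>UNIV. (f t - fo t)$e * \<delta>$e / y$e) = (\<Sum>e\<in>UNIV. (f 0 - fo 0)$e * \<delta>$e / y$e)"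
      proof (rule Q_const[where S="S \<union> So" and u="\<lambda>t. w t - wo t" and D=D])
        show "locally_finite_set (S \<union> So)" using Slf Solf by (rule lf_union)
        show "continuous_on {0..} (\<lambda>t. f t - fo t)" using cf cfo by (intro continuous_intros)
        show "transpose D *v \<delta> = 0" by (fact d0)
        show "\<And>e. y $ e \<noteq> 0" using ypos by (simp add: less_imp_neq[symmetric] less_imp_neq)
        show "0 \<le> t" by (fact that)
        fix s e assume s: "s > 0" "s \<notin> S \<union> So"
        have s1: "s \<notin> S" "s \<notin> So" using s(2) by auto
        have d1: "((\<lambda>s. f s $ e) has_real_derivative (y $ e * (D *v w s) $ e)) (at s)"
          using CL[OF s(1) s1(1)] by blast
        have d2: "((\<lambda>s. fo s $ e) has_real_derivative (y $ e * (D *v wo s) $ e)) (at s)"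
          by (rule dfo[OF s(1) s1(2)])
        have "((\<lambda>s. f s $ e - fo s $ e) has_real_derivative (y $ e * (D *v w s) $ e - y $ e * (D *v wo s) $ e)) (at s)"
          by (rule DERIV_diff[OF d1 d2])
        then show "((\<lambda>s. (f s - fo s) $ e) has_real_derivative (y $ e * (D *v (w s - wo s)) $ e)) (at s)"
          by (simp add: matrix_vector_mult_diff_distrib right_diff_distrib)
      qed
      also have "\<dots> = 0" using olh(2) by simp
      finally show ?thesis .
    qed
    have "((\<lambda>t. \<Sum>e\<in>UNIV. (f t - fo t)$e * \<delta>$e / y$e) \<longlongrightarrow> (\<Sum>e\<in>UNIV. (L - Lo)$e * \<delta>$e / y$e)) at_top"
      using L(1) Lo(1) ypos by (intro tendsto_intros) (auto simp: less_le)
    moreover have "eventually (\<lambda>t. (\<Sum>e\<in>UNIV. (f t - fo t)$e * \<delta>$e / y$e) = 0) at_top"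
      unfolding eventually_at_top_linorder using Q0 by blast
    then have "((\<lambda>t. \<Sum>e\<in>UNIV. (f t - fo t)$e * \<delta>$e / y$e) \<longlongrightarrow> 0) at_top"
      by (rule tendsto_eventually)
    ultimately have "(\<Sum>e\<in>UNIV. (L - Lo)$e * \<delta>$e / y$e) = 0"
      by (rule tendsto_unique[rotated]) simp_all
    then have "(\<Sum>e\<in>UNIV. \<delta>$e * \<delta>$e / y$e) = 0" unfolding \<delta>_def .
    moreover have "0 \<le> \<delta>$e * \<delta>$e / y$e" for e using ypos[of e] by simp
    ultimately have "\<forall>e\<in>UNIV. \<delta>$e * \<delta>$e / y$e = 0"
      by (subst sum_nonneg_eq_0_iff[symmetric]) auto
    then have "\<delta> = 0" using ypos by (auto simp: vec_eq_iff less_le)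
    then have "Lo = L" unfolding \<delta>_def by simp
    then show ?thesis using Lo(1) ol.w_lim by simp
  qed
  have conv: "\<exists>finf. (f \<longlongrightarrow> finf) at_top \<and> (w \<longlongrightarrow> 0) at_top \<and>
          (\<forall>fo wo. open_loop_sol y D Mv Ev p fo wo \<and> fo 0 = f 0 \<and> wo 0 = w 0 \<longrightarrow>
              (fo \<longlongrightarrow> finf) at_top \<and> (wo \<longlongrightarrow> 0) at_top)"
  proof (intro exI[of _ L] conjI allI impI)
    show "(f \<longlongrightarrow> L) at_top" by (fact L(1))
    show "(w \<longlongrightarrow> 0) at_top" by (fact cl.w_lim)
    fix fo wo assume "open_loop_sol y D Mv Ev p fo wo \<and> fo 0 = f 0 \<and> wo 0 = w 0"
    then show "(fo \<longlongrightarrow> L) at_top" "(wo \<longlongrightarrow> 0) at_top" using ol by auto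
  qed
  have lim1: "(aDF \<longlongrightarrow> 0) at_top" by (rule cl.b_lim)
  have lim2: "(aM \<longlongrightarrow> 0) at_top" by (rule cl.a_lim)
  have lim3: "((\<lambda>t. alpha_df D Ev Iw wlo whi wlt wht gl gh (f t) (w t) (p t) (aM t) + aM t) \<longlongrightarrow> 0) at_top"
    using tendsto_add[OF lim1 lim2] unfolding aDF_def by simp
  have c1: "\<forall>i\<in>Iw. w 0 $ i \<in> {wlo i .. whi i} \<longrightarrow> (\<forall>t\<ge>0. w t $ i \<in> {wlo i .. whi i})"
    using inv by blast
  have c2: "\<forall>i\<in>Iw. w 0 $ i \<notin> {wlo i .. whi i} \<longrightarrow> (\<exists>t0. \<forall>t\<ge>t0. w t $ i \<in> {wlo i .. whi i})"
    using attr by blast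
  show ?thesis
    unfolding aDF_def[symmetric]
    by (intro conjI c1 c2 conv lim1 lim2 lim3)
qed


end
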